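(* Let $n$ agents, agent $i$ holding a local dataset $D_i$, run $T$ iterations of the following perturbed decentralized SGD: at iteration $t$, each agent $i$ computes a stochastic gradient $g_i^{(t)}$ of its local loss on $D_i$ at its current parameter $\tilde x_i^{(t)}$, clips it as $\hat g_i^{(t)}=\min\{1,C/|g_i^{(t)}|\}\,g_i^{(t)}$ with threshold $C>0$, and the perturbed gradient vector is $\tilde{\mathbf{g}}^{(t)}=\hat{\mathbf{g}}^{(t)}+\mathbf{v}^{(t)}$ with $\mathbf{v}^{(t)}\sim\mathcal{N}(\mathbf{0},\mathbf{R})$ drawn afresh each iteration, where $\mathbf{R}\in\mathbb{R}^{n\times n}$ is positive definite ($\mathbf{R}\succ0$); the models are then updated as $\tilde{\mathbf{x}}^{(t+1)}=\mathbf{W}(\tilde{\mathbf{x}}^{(t)}-\eta_t\tilde{\mathbf{g}}^{(t)})$ for a mixing matrix $\mathbf{W}$ and step sizes $\eta_t$. Then, for any $\delta\in(0,1)$, this mechanism (whose output is the perturbed local models $\tilde{\mathbf{x}}^{(t)}$ shared over the $T$ iterations) is agent-level $(\varepsilon,\delta)$-differentially private with $$\varepsilon\le 2C^2T\max_{i}[\mathbf{R}^{-1}]_{ii}+2C\sqrt{2T\log(1/\delta)\max_{i}[\mathbf{R}^{-1}]_{ii}}.$$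
   Context: Two collections of datasets $D=\{D_1,\dots,D_n\}$ and $D'=\{D'_1,\dots,D'_n\}$ are agent-level neighbors if there is exactly one $j$ with $D_j\ne D'_j$ and $D_i=D'_i$ for all $i\ne j$. A randomized mechanism $M$ is agent-level $(\varepsilon,\delta)$-differentially private if for all agent-level neighboring $D,D'$ and all measurable output sets $S$, $\Pr[M(D)\in S]\le e^{\varepsilon}\Pr[M(D')\in S]+\delta$. Here $\max_i$ ranges over the agents $i\in\{1,\dots,n\}$ and $\log$ is the natural logarithm. *)

theory Defs
  imports "HOL-Probability.Probability"
begin

definition pos_def_mat :: "real^'n^'n \<Rightarrow> bool" where
  "pos_def_mat R \<longleftrightarrow> transpose R = R \<and> (\<forall>x. x \<noteq> 0 \<longrightarrow> x \<bullet> (R *v x) > 0)"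

definition mvnormal :: "real^'n^'n \<Rightarrow> (real^'n) measure" where
  "mvnormal R = density lborel (\<lambda>x. ennreal
     ((2*pi) powr (- real CARD('n) / 2) / sqrt (det R) * exp (- (x \<bullet> (matrix_inv R *v x)) / 2)))"

text \<open>Noise matrix for one iteration: rows indexed by agents 'n, columns by the
  model coordinates 'd; each column is independently N(0,R).\<close>
definition noise_dist :: "real^'n^'n \<Rightarrow> (real^'d^'n) measure" where
  "noise_dist R = distr (PiM UNIV (\<lambda>_::'d. mvnormal R)) borel (\<lambda>f. \<chi> i. \<chi> k. f k $ i)"

definition clip :: "real \<Rightarrow> real^'d \<Rightarrow> real^'d" where
  "clip C g = min 1 (C / norm g) *\<^sub>R g"

text \<open>Trajectory of perturbed decentralized SGD. sg t i Di x xi is the stochastic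
  gradient of agent i at iteration t on local dataset Di at parameter x, using the
  sampling randomness xi.\<close>
primrec dsgd_traj ::
  "(nat \<Rightarrow> 'n \<Rightarrow> 'data \<Rightarrow> real^'d \<Rightarrow> 's \<Rightarrow> real^'d) \<Rightarrow> real \<Rightarrow> real^'n^'n \<Rightarrow> (nat \<Rightarrow> real)
   \<Rightarrow> real^'d^'n \<Rightarrow> ('n::finite \<Rightarrow> 'data) \<Rightarrow> 's \<Rightarrow> (nat \<Rightarrow> real^'d^'n) \<Rightarrow> nat \<Rightarrow> real^'d^'n" where
  "dsgd_traj sg C W \<eta> x0 D \<xi> V 0 = x0"
| "dsgd_traj sg C W \<eta> x0 D \<xi> V (Suc t) =
     (let X = dsgd_traj sg C W \<eta> x0 D \<xi> V t;
          G = (\<chi> i. clip C (sg t i (D i) (X $ i) \<xi>))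
      in W ** (X - \<eta> t *\<^sub>R (G + V t)))"

definition dsgd_mech ::
  "'s measure \<Rightarrow> (nat \<Rightarrow> 'n \<Rightarrow> 'data \<Rightarrow> real^'d \<Rightarrow> 's \<Rightarrow> real^'d) \<Rightarrow> real \<Rightarrow> real^'n^'n
   \<Rightarrow> real^'n^'n \<Rightarrow> (nat \<Rightarrow> real) \<Rightarrow> real^'d^'n \<Rightarrow> nat \<Rightarrow> ('n::finite \<Rightarrow> 'data)
   \<Rightarrow> (nat \<Rightarrow> real^'d^'n) measure" where
  "dsgd_mech Q sg C R W \<eta> x0 T D =
     distr (Q \<Otimes>\<^sub>M PiM {..<T} (\<lambda>_. noise_dist R)) (PiM {..T} (\<lambda>_. borel))
       (\<lambda>(\<xi>, V). restrict (dsgd_traj sg C W \<eta> x0 D \<xi> V) {..T})"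

definition agent_neighbors :: "('n \<Rightarrow> 'data) \<Rightarrow> ('n \<Rightarrow> 'data) \<Rightarrow> bool" where
  "agent_neighbors D D' \<longleftrightarrow> (\<exists>j. D j \<noteq> D' j \<and> (\<forall>i. i \<noteq> j \<longrightarrow> D i = D' i))"

definition agent_level_DP :: "(('n \<Rightarrow> 'data) \<Rightarrow> 'b measure) \<Rightarrow> real \<Rightarrow> real \<Rightarrow> bool" where
  "agent_level_DP M \<epsilon> \<delta> \<longleftrightarrow>
     (\<forall>D D'. agent_neighbors D D' \<longrightarrow>
        (\<forall>S \<in> sets (M D). measure (M D) S \<le> exp \<epsilon> * measure (M D') S + \<delta>))"

end

theory Submission
  imports Defs
begin



definition emb :: "'n::finite set \<Rightarrow> real^'n^'n \<Rightarrow> real^'n^'n" where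
  "emb I A = (\<chi> i j. if i \<in> I \<and> j \<in> I then A$i$j else if i = j then 1 else 0)"

definition schur :: "real^'n::finite^'n \<Rightarrow> 'n \<Rightarrow> real^'n^'n" where
  "schur A k = (\<chi> i j. A$i$j - A$i$k * A$k$j / A$k$k)"

definition elim_mat :: "'n::finite set \<Rightarrow> 'n \<Rightarrow> ('n \<Rightarrow> real) \<Rightarrow> real^'n^'n" where
  "elim_mat J k c = (\<chi> i j. (if i = j then 1 else 0) - (if i \<in> J \<and> j = k then c i else 0))"

lemma det_elim_mat:
  assumes "k \<notin> J"
  shows "det (elim_mat J k c) = 1"
proof -
  have "finite J" by simp
  then show ?thesis using assms
  proof (induction J rule: finite_induct)
    case empty
    have "elim_mat {} k c = mat 1" by (simp add: elim_mat_def mat_def vec_eq_iff)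
    then show ?case by simp
  next
    case (insert i J)
    let ?A = "elim_mat J k c"
    have ik: "i \<noteq> k" using insert by auto
    have "elim_mat (insert i J) k c = (\<chi> r. if r = i then row i ?A + (- c i) *s row k ?A else row r ?A)"
      using insert(2,4) by (auto simp: elim_mat_def vec_eq_iff row_def)
    then have "det (elim_mat (insert i J) k c) = det ?A"
      using det_row_operation[OF ik, of ?A "- c i"] by simp
    then show ?case using insert by simp
  qed
qed



lemma elim_mult_left:
  "(elim_mat J k c ** E) $ i $ j = E$i$j - (if i \<in> J then c i * E$k$j else 0)"
proof -
  have "(elim_mat J k c ** E) $ i $ j =
     (\<Sum>l\<in>UNIV. (if i = l then E$l$j else 0) - (if i \<in> J \<and> l = k then c i * E$l$j else 0))"
    by (auto simp: matrix_matrix_mult_def elim_mat_def left_diff_distrib intro!: sum.cong)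
  also have "\<dots> = E$i$j - (if i \<in> J then c i * E$k$j else 0)"
    by (simp add: sum_subtractf)
  finally show ?thesis .
qed

lemma elim_mult_right:
  "(E ** transpose (elim_mat J k c)) $ i $ j = E$i$j - (if j \<in> J then c j * E$i$k else 0)"
proof -
  have "(E ** transpose (elim_mat J k c)) $ i $ j =
     (\<Sum>l\<in>UNIV. (if j = l then E$i$l else 0) - (if j \<in> J \<and> l = k then c j * E$i$l else 0))"
    by (auto simp: matrix_matrix_mult_def elim_mat_def transpose_def right_diff_distrib intro!: sum.cong)
  also have "\<dots> = E$i$j - (if j \<in> J then c j * E$i$k else 0)"
    by (simp add: sum_subtractf)
  finally show ?thesis .
qed

lemma det_emb_insert:
  fixes A :: "real^'n::finite^'n"
  assumes k: "k \<notin> I" and a: "A$k$k \<noteq> 0" and sym: "\<And>i j. A$i$j = A$j$i"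
  shows "det (emb (insert k I) A) = A$k$k * det (emb I (schur A k))"
proof -
  define c where "c i = A$i$k / A$k$k" for i
  let ?G = "elim_mat I k c"
  let ?E = "emb (insert k I) A"
  let ?S = "emb I (schur A k)"
  let ?F = "(\<chi> i. if i = k then A$k$k *s row k ?S else row i ?S) :: real^'n^'n"
  have eq: "?G ** ?E ** transpose ?G = ?F"
  proof (intro vec_eq_iff[THEN iffD2] allI)
    fix i j
    show "(?G ** ?E ** transpose ?G) $ i $ j = ?F $ i $ j"
      unfolding elim_mult_right elim_mult_left
      using k a sym[of i k] sym[of j k] sym[of k j]
      by (auto simp: emb_def schur_def row_def c_def field_simps)
  qed
  have "det ?E = det (?G ** ?E ** transpose ?G)"
    by (simp add: det_mul det_elim_mat[OF k])
  also have "\<dots> = A$k$k * det (\<chi> i. if i = k then row k ?S else row i ?S)"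
    unfolding eq by (rule det_row_mul)
  also have "(\<chi> i. if i = k then row k ?S else row i ?S) = ?S"
    by (simp add: vec_eq_iff row_def)
  finally show ?thesis .
qed



lemma gauss_1d:
  fixes a s :: real assumes a: "a > 0"
  shows "(\<integral>\<^sup>+t. ennreal (exp (- (a * (t + s)\<^sup>2) / 2)) \<partial>lborel) = ennreal (sqrt (2 * pi / a))"
proof -
  define \<sigma> where "\<sigma> = 1 / sqrt a"
  have \<sigma>: "\<sigma> > 0" "\<sigma>\<^sup>2 = 1 / a" using a by (auto simp: \<sigma>_def power_divide)
  have eq: "exp (- (a * (t + s)\<^sup>2) / 2) = sqrt (2 * pi / a) * normal_density (-s) \<sigma> t" for t
  proof -
    have "normal_density (-s) \<sigma> t = 1 / sqrt (2 * pi / a) * exp (- (a * (t + s)\<^sup>2) / 2)"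
      unfolding normal_density_def \<sigma>(2) using a by (simp add: field_simps)
    moreover have "sqrt (2 * pi / a) > 0" using a by simp
    ultimately show ?thesis using a by simp
  qed
  have "(\<integral>\<^sup>+t. ennreal (exp (- (a * (t + s)\<^sup>2) / 2)) \<partial>lborel) =
        (\<integral>\<^sup>+t. ennreal (sqrt (2 * pi / a)) * ennreal (normal_density (-s) \<sigma> t) \<partial>lborel)"
    by (intro nn_integral_cong, subst eq, rule ennreal_mult) (use a in \<open>auto simp: normal_density_nonneg\<close>)
  also have "\<dots> = ennreal (sqrt (2 * pi / a)) * (\<integral>\<^sup>+t. ennreal (normal_density (-s) \<sigma> t) \<partial>lborel)"
    by (rule nn_integral_cmult) simp
  also have "(\<integral>\<^sup>+t. ennreal (normal_density (-s) \<sigma> t) \<partial>lborel) = 1"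
  proof -
    interpret prob_space "density lborel (normal_density (-s) \<sigma>)"
      using prob_space_normal_density \<sigma> by blast
    show ?thesis using emeasure_space_1 by (simp add: emeasure_density)
  qed
  finally show ?thesis by simp
qed



definition qf :: "'n::finite set \<Rightarrow> real^'n^'n \<Rightarrow> ('n \<Rightarrow> real) \<Rightarrow> real" where
  "qf I A x = (\<Sum>i\<in>I. \<Sum>j\<in>I. x i * A$i$j * x j)"

lemma qf_insert:
  fixes A :: "real^'n::finite^'n"
  assumes k: "k \<notin> I" and a: "A$k$k \<noteq> 0" and sym: "\<And>i j. A$i$j = A$j$i"
  shows "qf (insert k I) A y = A$k$k * (y k + (\<Sum>j\<in>I. A$k$j * y j) / A$k$k)\<^sup>2 + qf I (schur A k) y"
proof -
  define S where "S = (\<Sum>j\<in>I. A$k$j * y j)"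
  have fin: "finite I" by simp
  have 1: "qf (insert k I) A y = y k * A$k$k * y k + (\<Sum>j\<in>I. y k * A$k$j * y j)
      + (\<Sum>i\<in>I. y i * A$i$k * y k) + qf I A y"
    using k fin by (simp add: qf_def sum.distrib algebra_simps)
  have 2: "(\<Sum>j\<in>I. y k * A$k$j * y j) = y k * S"
    by (simp add: S_def sum_distrib_left mult.assoc)
  have 3: "(\<Sum>i\<in>I. y i * A$i$k * y k) = y k * S"
    unfolding S_def sum_distrib_left by (rule sum.cong) (auto simp: sym[of _ k])
  have 4: "qf I (schur A k) y = qf I A y - S * S / A$k$k"
  proof -
    have "qf I (schur A k) y = (\<Sum>i\<in>I. \<Sum>j\<in>I. y i * A$i$j * y j - (y i * A$k$i) * (A$k$j * y j) / A$k$k)"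
      unfolding qf_def schur_def
    proof (intro sum.cong refl)
      fix i j
      show "y i * (\<chi> i j. A $ i $ j - A $ i $ k * A $ k $ j / A $ k $ k) $ i $ j * y j =
         y i * A $ i $ j * y j - y i * A $ k $ i * (A $ k $ j * y j) / A $ k $ k"
        using sym[of i k] by (simp add: algebra_simps)
    qed
    also have "\<dots> = qf I A y - (\<Sum>i\<in>I. y i * A$k$i) * S / A$k$k"
    proof -
      have "(\<Sum>j\<in>I. y i * A$i$j * y j - (y i * A$k$i) * (A$k$j * y j) / A$k$k)
          = (\<Sum>j\<in>I. y i * A$i$j * y j) - (y i * A$k$i) * S / A$k$k" for i
        unfolding sum_subtractf S_def sum_divide_distrib[symmetric] sum_distrib_left by simp
      then have "(\<Sum>i\<in>I. \<Sum>j\<in>I. y i * A$i$j * y j - (y i * A$k$i) * (A$k$j * y j) / A$k$k)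
          = (\<Sum>i\<in>I. (\<Sum>j\<in>I. y i * A$i$j * y j) - (y i * A$k$i) * S / A$k$k)"
        by simp
      also have "\<dots> = qf I A y - (\<Sum>i\<in>I. (y i * A$k$i) * S / A$k$k)"
        unfolding sum_subtractf qf_def ..
      also have "(\<Sum>i\<in>I. (y i * A$k$i) * S / A$k$k) = (\<Sum>i\<in>I. y i * A$k$i) * S / A$k$k"
        unfolding sum_divide_distrib[symmetric] sum_distrib_right ..
      finally show ?thesis .
    qed
    also have "(\<Sum>i\<in>I. y i * A$k$i) = S" by (simp add: S_def mult.commute)
    finally show ?thesis .
  qed
  show ?thesis unfolding 1 2 3 4 S_def[symmetric] using a
    by (simp add: power2_eq_square field_simps)
qed



lemma qf_cong: "(\<And>i. i \<in> I \<Longrightarrow> x i = y i) \<Longrightarrow> qf I A x = qf I A y"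
  unfolding qf_def by (intro sum.cong refl) auto

lemma qf_meas[measurable]: "qf I A \<in> borel_measurable (PiM I (\<lambda>_. lborel))"
  unfolding qf_def by measurable

interpretation lb_prod: product_sigma_finite "\<lambda>_::'n. lborel"
  by standard

lemma gauss_PiM:
  fixes A :: "real^'n::finite^'n"
  assumes "\<And>i j. A$i$j = A$j$i" "\<And>x. (\<exists>i\<in>I. x i \<noteq> 0) \<Longrightarrow> qf I A x > 0"
  shows "det (emb I A) > 0 \<and> (\<integral>\<^sup>+x. ennreal (exp (- qf I A x / 2)) \<partial>PiM I (\<lambda>_. lborel))
     = ennreal ((2*pi) powr (real (card I)/2) / sqrt (det (emb I A)))"
proof -
  have "finite I" by simp
  then show ?thesis using assms
  proof (induction I arbitrary: A rule: finite_induct)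
    case empty
    have "emb {} A = mat 1" by (simp add: emb_def mat_def vec_eq_iff)
    then show ?case by (simp add: qf_def PiM_empty)
  next
    case (insert k I)
    note sym = insert.prems(1)
    define a where "a = A$k$k"
    have "qf (insert k I) A (\<lambda>i. if i = k then 1 else 0) = a"
    proof -
      have ne: "i \<in> I \<Longrightarrow> i \<noteq> k" for i using insert.hyps by auto
      show ?thesis using insert.hyps by (simp add: qf_def a_def ne cong: sum.cong)
    qed
    moreover have "qf (insert k I) A (\<lambda>i. if i = k then 1 else 0) > 0"
      by (rule insert.prems(2)) auto
    ultimately have a: "a > 0" by simp
    define S where "S = schur A k"
    have symS: "S$i$j = S$j$i" for i j
      unfolding S_def schur_def using sym[of i j] sym[of i k] sym[of j k] by simp
    have qfi: "qf (insert k I) A y = a * (y k + (\<Sum>j\<in>I. A$k$j * y j) / a)\<^sup>2 + qf I S y" for y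
      unfolding a_def S_def by (rule qf_insert) (use insert.hyps a a_def sym in auto)
    have pdS: "qf I S x > 0" if "\<exists>i\<in>I. x i \<noteq> 0" for x
    proof -
      define y where "y = x(k := - (\<Sum>j\<in>I. A$k$j * x j) / a)"
      have yI: "y j = x j" if "j \<in> I" for j using that insert.hyps by (auto simp: y_def)
      have "(\<Sum>j\<in>I. A$k$j * y j) = (\<Sum>j\<in>I. A$k$j * x j)" by (intro sum.cong) (auto simp: yI)
      then have "qf (insert k I) A y = qf I S x"
        unfolding qfi using qf_cong[of I y x S] yI by (simp add: y_def)
      moreover have "qf (insert k I) A y > 0"
        by (rule insert.prems(2)) (use that yI in auto)
      ultimately show ?thesis by simp
    qed
    from insert.IH[of S, OF symS pdS]
    have IH1: "det (emb I S) > 0" and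
      IH2: "(\<integral>\<^sup>+x. ennreal (exp (- qf I S x / 2)) \<partial>PiM I (\<lambda>_. lborel))
        = ennreal ((2*pi) powr (real (card I)/2) / sqrt (det (emb I S)))" by blast+
    have det: "det (emb (insert k I) A) = a * det (emb I S)"
      unfolding a_def S_def by (rule det_emb_insert) (use insert.hyps a a_def sym in auto)
    have "(\<integral>\<^sup>+x. ennreal (exp (- qf (insert k I) A x / 2)) \<partial>PiM (insert k I) (\<lambda>_. lborel))
       = (\<integral>\<^sup>+x. (\<integral>\<^sup>+t. ennreal (exp (- qf (insert k I) A (x(k := t)) / 2)) \<partial>lborel) \<partial>PiM I (\<lambda>_. lborel))"
    proof (rule lb_prod.product_nn_integral_insert)
      show "(\<lambda>x. ennreal (exp (- qf (insert k I) A x / 2))) \<in> borel_measurable (PiM (insert k I) (\<lambda>_. lborel))"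
        by measurable
    qed (use insert.hyps in auto)
    also have "\<dots> = (\<integral>\<^sup>+x. ennreal (exp (- qf I S x / 2)) * ennreal (sqrt (2 * pi / a)) \<partial>PiM I (\<lambda>_. lborel))"
    proof (intro nn_integral_cong)
      fix x
      define s where "s = (\<Sum>j\<in>I. A$k$j * x j) / a"
      have e: "exp (- qf (insert k I) A (x(k := t)) / 2) = exp (- qf I S x / 2) * exp (- (a * (t + s)\<^sup>2) / 2)" for t
      proof -
        have "(\<Sum>j\<in>I. A$k$j * (x(k:=t)) j) = (\<Sum>j\<in>I. A$k$j * x j)"
          using insert.hyps by (intro sum.cong) auto
        moreover have "qf I S (x(k:=t)) = qf I S x"
          using insert.hyps by (intro qf_cong) auto
        ultimately show ?thesis
          unfolding qfi by (simp add: s_def exp_add[symmetric] field_simps)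
      qed
      have "(\<integral>\<^sup>+t. ennreal (exp (- qf (insert k I) A (x(k := t)) / 2)) \<partial>lborel)
          = (\<integral>\<^sup>+t. ennreal (exp (- qf I S x / 2)) * ennreal (exp (- (a * (t + s)\<^sup>2) / 2)) \<partial>lborel)"
        by (intro nn_integral_cong, subst e, rule ennreal_mult) auto
      also have "\<dots> = ennreal (exp (- qf I S x / 2)) * (\<integral>\<^sup>+t. ennreal (exp (- (a * (t + s)\<^sup>2) / 2)) \<partial>lborel)"
        by (rule nn_integral_cmult) simp
      also have "\<dots> = ennreal (exp (- qf I S x / 2)) * ennreal (sqrt (2 * pi / a))"
        by (subst gauss_1d[OF a]) (rule refl)
      finally show "(\<integral>\<^sup>+t. ennreal (exp (- qf (insert k I) A (x(k := t)) / 2)) \<partial>lborel)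
          = ennreal (exp (- qf I S x / 2)) * ennreal (sqrt (2 * pi / a))" .
    qed
    also have "\<dots> = (\<integral>\<^sup>+x. ennreal (exp (- qf I S x / 2)) \<partial>PiM I (\<lambda>_. lborel)) * ennreal (sqrt (2 * pi / a))"
      by (rule nn_integral_multc) (use qf_meas in measurable)
    also have "\<dots> = ennreal ((2*pi) powr (real (card I)/2) / sqrt (det (emb I S)) * sqrt (2 * pi / a))"
      unfolding IH2 by (rule ennreal_mult[symmetric]) (use a IH1 in auto)
    also have "(2*pi) powr (real (card I)/2) / sqrt (det (emb I S)) * sqrt (2 * pi / a)
        = (2*pi) powr (real (card (insert k I))/2) / sqrt (det (emb (insert k I) A))"
    proof -
      have "(2*pi) powr (real (card (insert k I))/2) = (2*pi) powr (real (card I)/2) * (2*pi) powr (1/2)"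
        using insert.hyps by (simp add: powr_add[symmetric] add_divide_distrib add.commute)
      also have "(2*pi) powr (1/2) = sqrt (2*pi)" by (simp add: powr_half_sqrt)
      finally show ?thesis
        unfolding det using a IH1 by (simp add: real_sqrt_mult real_sqrt_divide field_simps)
    qed
    finally show ?case using det a IH1 by simp
  qed
qed



lemma vec_lambda_meas[measurable]: "(vec_lambda :: ('n \<Rightarrow> real) \<Rightarrow> real^'n) \<in> borel_measurable (PiM UNIV (\<lambda>_::'n::finite. lborel))"
  proof -
    have "(\<lambda>x. (vec_lambda x :: real^'n) \<bullet> axis i 1) \<in> borel_measurable (PiM UNIV (\<lambda>_::'n. lborel))" for i
      by (simp add: inner_axis)
    then have "\<forall>b\<in>(Basis::(real^'n) set). (\<lambda>x. vec_lambda x \<bullet> b) \<in> borel_measurable (PiM UNIV (\<lambda>_::'n. lborel))"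
      by (auto simp: Basis_vec_def Basis_real_def)
    then show ?thesis by (subst borel_measurable_euclidean_space) auto
  qed

lemma lborel_vec: "(lborel :: (real^'n::finite) measure) = distr (PiM UNIV (\<lambda>_::'n. lborel)) borel vec_lambda"
proof (rule lborel_eqI)
  note meas = vec_lambda_meas
  fix l u :: "real^'n" assume le: "\<And>b. b \<in> Basis \<Longrightarrow> l \<bullet> b \<le> u \<bullet> b"
  have le': "l$i \<le> u$i" for i using le[of "axis i 1"] by (simp add: inner_axis)
  have pre: "vec_lambda -` box l u \<inter> space (PiM UNIV (\<lambda>_::'n. lborel)) = PiE UNIV (\<lambda>i. {l$i<..<u$i})"
    by (auto simp: mem_box_cart space_PiM PiE_def Pi_def)
  have "emeasure (distr (PiM UNIV (\<lambda>_::'n. lborel)) borel vec_lambda) (box l u)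
      = emeasure (PiM UNIV (\<lambda>_::'n. lborel)) (PiE UNIV (\<lambda>i. {l$i<..<u$i}))"
    using meas by (simp add: emeasure_distr pre)
  also have "\<dots> = (\<Prod>i\<in>UNIV. emeasure lborel {l$i<..<u$i})"
    by (rule lb_prod.emeasure_PiM) auto
  also have "\<dots> = (\<Prod>i\<in>UNIV. ennreal (u$i - l$i))"
    using le' by simp
  also have "\<dots> = ennreal (\<Prod>i\<in>UNIV. (u$i - l$i))"
    using le' by (simp add: prod_ennreal)
  also have "(\<Prod>i\<in>UNIV. (u$i - l$i)) = (\<Prod>b\<in>Basis. (u - l) \<bullet> b)"
  proof -
    have B: "(Basis :: (real^'n) set) = range (\<lambda>i. axis i 1)" by (auto simp: Basis_vec_def)
    have inj: "inj (\<lambda>i::'n. axis i (1::real))" by (auto simp: inj_def axis_eq_axis)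
    show ?thesis unfolding B prod.reindex[OF inj] by (simp add: inner_axis)
  qed
  finally show "emeasure (distr (PiM UNIV (\<lambda>_::'n. lborel)) borel vec_lambda) (box l u) = (\<Prod>b\<in>Basis. (u - l) \<bullet> b)" .
qed simp

lemma pd_inv_facts:
  fixes R :: "real^'n::finite^'n"
  assumes "pos_def_mat R"
  defines "P \<equiv> matrix_inv R"
  shows "R ** P = mat 1" "P ** R = mat 1" "\<And>i j. P$i$j = P$j$i"
    "\<And>x. x \<noteq> 0 \<Longrightarrow> x \<bullet> (P *v x) > 0" "det P * det R = 1"
proof -
  have symR: "transpose R = R" and pdR: "\<And>x. x \<noteq> 0 \<Longrightarrow> x \<bullet> (R *v x) > 0"
    using assms unfolding pos_def_mat_def by auto
  have "\<forall>x. R *v x = 0 \<longrightarrow> x = 0"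
  proof (intro allI impI)
    fix x assume "R *v x = 0"
    then show "x = 0" using pdR[of x] by (cases "x = 0") auto
  qed
  then have inv: "invertible R"
    using matrix_left_invertible_ker invertible_left_inverse by blast
  then have "\<exists>A'. R ** A' = mat 1 \<and> A' ** R = mat 1" unfolding invertible_def by blast
  then have PR: "R ** P = mat 1 \<and> P ** R = mat 1"
    unfolding P_def matrix_inv_def by (rule someI_ex)
  then show RP1: "R ** P = mat 1" and PR1: "P ** R = mat 1" by auto
  have "transpose P ** R = mat 1"
    using arg_cong[OF RP1, of transpose] by (simp add: matrix_transpose_mul symR)
  then have tP: "transpose P = P"
    by (metis RP1 matrix_mul_assoc matrix_mul_lid matrix_mul_rid)
  show "P$i$j = P$j$i" for i j
    using arg_cong[OF tP, of "\<lambda>M. M$j$i"] by (simp add: transpose_def)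
  show "x \<bullet> (P *v x) > 0" if "x \<noteq> 0" for x
  proof -
    define y where "y = P *v x"
    have xy: "x = R *v y" unfolding y_def matrix_vector_mul_assoc RP1 by simp
    have "y \<noteq> 0" using that xy by auto
    then have "y \<bullet> (R *v y) > 0" by (rule pdR)
    moreover have "y \<bullet> (R *v y) = x \<bullet> (P *v x)"
      by (subst inner_commute, subst xy[symmetric]) (simp add: y_def)
    ultimately show ?thesis by simp
  qed
  show "det P * det R = 1" using PR1 det_mul[of P R] by simp
qed

lemma inner_qf:
  fixes P :: "real^'n::finite^'n"
  shows "x \<bullet> (P *v x) = qf UNIV P (\<lambda>i. x$i)"
  by (simp add: qf_def inner_vec_def matrix_vector_mult_def sum_distrib_left mult.assoc)

lemma quad_meas[measurable]:
  fixes P :: "real^'n::finite^'n"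
  shows "(\<lambda>x. x \<bullet> (P *v x)) \<in> borel_measurable borel"
  unfolding inner_qf qf_def by measurable

lemma emb_UNIV: "emb UNIV A = A"
  by (simp add: emb_def vec_eq_iff)

lemma mvnormal_facts:
  fixes R :: "real^'n::finite^'n"
  assumes R: "pos_def_mat R"
  shows "det R > 0" "prob_space (mvnormal R)"
proof -
  define P where "P = matrix_inv R"
  note F = pd_inv_facts[OF R, folded P_def]
  have G: "det (emb UNIV P) > 0 \<and> (\<integral>\<^sup>+x. ennreal (exp (- qf UNIV P x / 2)) \<partial>PiM UNIV (\<lambda>_. lborel))
     = ennreal ((2*pi) powr (real (card (UNIV::'n set))/2) / sqrt (det (emb UNIV P)))"
  proof (rule gauss_PiM)
    show "P$i$j = P$j$i" for i j by (rule F(3))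
    fix x :: "'n \<Rightarrow> real" assume "\<exists>i\<in>UNIV. x i \<noteq> 0"
    then have "vec_lambda x \<noteq> 0" by (auto simp: vec_eq_iff)
    from F(4)[OF this] show "qf UNIV P x > 0" by (simp add: inner_qf)
  qed
  then have dP: "det P > 0" by (simp add: emb_UNIV)
  show dR: "det R > 0"
    using F(5) dP zero_less_mult_iff[of "det P" "det R"] by simp
  have int: "(\<integral>\<^sup>+x. ennreal (exp (- (x \<bullet> (P *v x)) / 2)) \<partial>lborel)
     = ennreal ((2*pi) powr (real CARD('n)/2) / sqrt (det P))"
  proof -
    have "(\<integral>\<^sup>+x. ennreal (exp (- (x \<bullet> (P *v x)) / 2)) \<partial>lborel)
        = (\<integral>\<^sup>+x. ennreal (exp (- (vec_lambda x \<bullet> (P *v vec_lambda x)) / 2)) \<partial>PiM UNIV (\<lambda>_::'n. lborel))"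
      by (subst lborel_vec) (rule nn_integral_distr; simp)
    also have "\<dots> = (\<integral>\<^sup>+x. ennreal (exp (- qf UNIV P x / 2)) \<partial>PiM UNIV (\<lambda>_::'n. lborel))"
      by (simp add: inner_qf)
    finally show ?thesis using G by (simp add: emb_UNIV)
  qed
  show "prob_space (mvnormal R)"
  proof
    define c where "c = (2*pi) powr (- real CARD('n) / 2) / sqrt (det R)"
    have c: "c \<ge> 0" using dR by (simp add: c_def)
    have "emeasure (mvnormal R) (space (mvnormal R)) =
        (\<integral>\<^sup>+x. ennreal (c * exp (- (x \<bullet> (P *v x)) / 2)) \<partial>lborel)"
      unfolding mvnormal_def P_def[symmetric] c_def[symmetric]
      by (subst emeasure_density) auto
    also have "\<dots> = (\<integral>\<^sup>+x. ennreal c * ennreal (exp (- (x \<bullet> (P *v x)) / 2)) \<partial>lborel)"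
      by (intro nn_integral_cong, rule ennreal_mult) (use c in auto)
    also have "\<dots> = ennreal c * ennreal ((2*pi) powr (real CARD('n)/2) / sqrt (det P))"
      unfolding int[symmetric] by (rule nn_integral_cmult) simp
    also have "\<dots> = ennreal (c * ((2*pi) powr (real CARD('n)/2) / sqrt (det P)))"
      using c dP by (subst ennreal_mult) auto
    also have "c * ((2*pi) powr (real CARD('n)/2) / sqrt (det P)) = 1"
    proof -
      have "(2*pi) powr (- real CARD('n) / 2) * (2*pi) powr (real CARD('n)/2) = 1"
        by (simp add: powr_add[symmetric])
      moreover have "sqrt (det R) * sqrt (det P) = 1"
        using F(5) by (simp add: real_sqrt_mult[symmetric] mult.commute)
      ultimately show ?thesis unfolding c_def using dR dP
        by (simp add: field_simps)
    qed
    finally show "emeasure (mvnormal R) (space (mvnormal R)) = 1" by simp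
  qed
qed



lemma PiM_shift:
  fixes M :: "'i \<Rightarrow> 'a::ab_group_add measure" and c :: "'i \<Rightarrow> 'a"
  assumes psf: "product_sigma_finite M"
  assumes fin: "finite I"
  assumes shift: "\<And>i g. i \<in> I \<Longrightarrow> g \<in> borel_measurable (M i) \<Longrightarrow>
      (\<integral>\<^sup>+y. g (y + c i) \<partial>M i) = (\<integral>\<^sup>+y. g y * e i y \<partial>M i)"
    and e_meas[measurable]: "\<And>i. i \<in> I \<Longrightarrow> e i \<in> borel_measurable (M i)"
    and add_meas[measurable]: "\<And>i. i \<in> I \<Longrightarrow> (\<lambda>y. y + c i) \<in> M i \<rightarrow>\<^sub>M M i"
    and G[measurable]: "G \<in> borel_measurable (PiM I M)"
  shows "(\<integral>\<^sup>+f. G (restrict (\<lambda>k. f k + c k) I) \<partial>PiM I M) = (\<integral>\<^sup>+f. G f * (\<Prod>k\<in>I. e k (f k)) \<partial>PiM I M)"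
  using fin shift e_meas add_meas G
proof (induction I arbitrary: G rule: finite_induct)
  case empty
  then show ?case by (simp add: PiM_empty restrict_def nn_integral_count_space_finite)
next
  case (insert i I)
  interpret product_sigma_finite M by (fact psf)
  interpret Mi: sigma_finite_measure "M i" by (rule sigma_finite_measures)
  have shift_i: "\<And>g. g \<in> borel_measurable (M i) \<Longrightarrow> (\<integral>\<^sup>+y. g (y + c i) \<partial>M i) = (\<integral>\<^sup>+y. g y * e i y \<partial>M i)"
    using insert.prems(1) by blast
  have [measurable]: "e k \<in> borel_measurable (M k)" if "k \<in> insert i I" for k using insert.prems(2) that by blast
  have [measurable]: "(\<lambda>y. y + c k) \<in> M k \<rightarrow>\<^sub>M M k" if "k \<in> insert i I" for k using insert.prems(3) that by blast
  note G[measurable] = insert.prems(4)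
  define G' where "G' z = (\<integral>\<^sup>+y. G (z(i := y)) * e i y \<partial>M i)" for z
  have G'_meas[measurable]: "G' \<in> borel_measurable (PiM I M)"
    unfolding G'_def by measurable
  have "(\<integral>\<^sup>+f. G (restrict (\<lambda>k. f k + c k) (insert i I)) \<partial>PiM (insert i I) M)
      = (\<integral>\<^sup>+x. (\<integral>\<^sup>+y. G (restrict (\<lambda>k. (x(i := y)) k + c k) (insert i I)) \<partial>M i) \<partial>PiM I M)"
    by (rule product_nn_integral_insert) (use insert.hyps in auto)
  also have "\<dots> = (\<integral>\<^sup>+x. G' (restrict (\<lambda>k. x k + c k) I) \<partial>PiM I M)"
  proof (intro nn_integral_cong)
    fix x assume x: "x \<in> space (PiM I M)"
    define z where "z = restrict (\<lambda>k. x k + c k) I"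
    have z: "z \<in> space (PiM I M)"
      using x unfolding z_def by (auto simp: space_PiM PiE_iff intro: measurable_space[OF insert.prems(3)])
    have eq: "restrict (\<lambda>k. (x(i := y)) k + c k) (insert i I) = z(i := y + c i)" for y
      using insert.hyps by (auto simp: z_def restrict_def fun_eq_iff)
    have "(\<integral>\<^sup>+y. G (z(i := y + c i)) \<partial>M i) = (\<integral>\<^sup>+y. G (z(i := y)) * e i y \<partial>M i)"
      by (rule shift_i[where g="\<lambda>y. G (z(i := y))"]) (use z in measurable)
    then show "(\<integral>\<^sup>+y. G (restrict (\<lambda>k. (x(i := y)) k + c k) (insert i I)) \<partial>M i) = G' (restrict (\<lambda>k. x k + c k) I)"
      unfolding eq G'_def z_def .
  qed
  also have "\<dots> = (\<integral>\<^sup>+x. G' x * (\<Prod>k\<in>I. e k (x k)) \<partial>PiM I M)"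
    by (rule insert.IH) (use insert.prems in auto)
  also have "\<dots> = (\<integral>\<^sup>+x. (\<integral>\<^sup>+y. G (x(i := y)) * (\<Prod>k\<in>insert i I. e k ((x(i := y)) k)) \<partial>M i) \<partial>PiM I M)"
  proof (intro nn_integral_cong)
    fix x assume x: "x \<in> space (PiM I M)"
    have p: "(\<Prod>k\<in>insert i I. e k ((x(i := y)) k)) = e i y * (\<Prod>k\<in>I. e k (x k))" for y
    proof -
      have "(\<Prod>k\<in>I. e k ((x(i := y)) k)) = (\<Prod>k\<in>I. e k (x k))"
        using insert.hyps by (intro prod.cong) auto
      then show ?thesis using insert.hyps by simp
    qed
    show "G' x * (\<Prod>k\<in>I. e k (x k)) = (\<integral>\<^sup>+y. G (x(i := y)) * (\<Prod>k\<in>insert i I. e k ((x(i := y)) k)) \<partial>M i)"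
      unfolding G'_def p
      by (subst nn_integral_multc[symmetric]) (use x in \<open>measurable, simp add: mult.assoc\<close>)
  qed
  also have "\<dots> = (\<integral>\<^sup>+f. G f * (\<Prod>k\<in>insert i I. e k (f k)) \<partial>PiM (insert i I) M)"
    by (rule product_nn_integral_insert[symmetric]) (use insert.hyps in auto)
  finally show ?case .
qed



definition lossv :: "real^'n::finite^'n \<Rightarrow> real^'n \<Rightarrow> real^'n \<Rightarrow> real" where
  "lossv P b x = b \<bullet> (P *v x) - b \<bullet> (P *v b) / 2"

definition col :: "real^'d::finite^'n::finite \<Rightarrow> 'd \<Rightarrow> real^'n" where
  "col V k = (\<chi> i. V$i$k)"

definition lossm :: "real^'n::finite^'n \<Rightarrow> real^'d::finite^'n \<Rightarrow> real^'d^'n \<Rightarrow> real" where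
  "lossm P b V = (\<Sum>k\<in>UNIV. lossv P (col b k) (col V k))"

lemma sym_inner:
  fixes P :: "real^'n::finite^'n"
  assumes "\<And>i j. P$i$j = P$j$i"
  shows "y \<bullet> (P *v b) = b \<bullet> (P *v y)"
proof -
  have tP: "transpose P = P" using assms by (simp add: transpose_def vec_eq_iff)
  have "y \<bullet> (P *v b) = (y v* P) \<bullet> b" by (simp add: dot_lmul_matrix)
  also have "y v* P = transpose P *v y" by simp
  finally show ?thesis by (simp add: tP inner_commute)
qed

lemma borel_measurable_vec:
  fixes g :: "'a \<Rightarrow> 'b::euclidean_space^'m::finite"
  assumes "\<And>i. (\<lambda>x. g x $ i) \<in> borel_measurable M"
  shows "g \<in> borel_measurable M"
proof (subst borel_measurable_euclidean_space, intro ballI)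
  fix b :: "'b^'m" assume "b \<in> Basis"
  then obtain i u where b: "b = axis i u" "u \<in> Basis" by (auto simp: Basis_vec_def)
  show "(\<lambda>x. g x \<bullet> b) \<in> borel_measurable M"
    unfolding b inner_axis using assms[of i] by measurable
qed

lemma borel_measurable_vec_nth[measurable]:
  "(\<lambda>x::'b::euclidean_space^'m::finite. x $ i) \<in> borel_measurable borel"
  by (intro borel_measurable_continuous_onI linear_continuous_on bounded_linear_vec_nth)

lemma mvmult_meas[measurable]:
  fixes P :: "real^'m::finite^'n::finite"
  shows "(\<lambda>x. P *v x) \<in> borel_measurable borel"
  by (rule borel_measurable_vec) (simp add: matrix_vector_mult_def)

lemma sets_mvnormal[simp, measurable_cong]: "sets (mvnormal R) = sets borel"
  by (simp add: mvnormal_def)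

lemma mvnormal_shift:
  fixes R :: "real^'n::finite^'n"
  assumes R: "pos_def_mat R" and K[measurable]: "K \<in> borel_measurable borel"
  shows "(\<integral>\<^sup>+x. K (x + b) \<partial>mvnormal R) = (\<integral>\<^sup>+x. K x * ennreal (exp (lossv (matrix_inv R) b x)) \<partial>mvnormal R)"
proof -
  define P where "P = matrix_inv R"
  note F = pd_inv_facts[OF R, folded P_def]
  define p where "p x = (2*pi) powr (- real CARD('n) / 2) / sqrt (det R) * exp (- (x \<bullet> (P *v x)) / 2)" for x
  have p_nn: "p x \<ge> 0" for x using mvnormal_facts(1)[OF R] by (simp add: p_def)
  have [measurable]: "p \<in> borel_measurable borel" unfolding p_def by measurable
  have mv: "mvnormal R = density lborel (\<lambda>x. ennreal (p x))"
    by (simp add: mvnormal_def p_def P_def)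
  have pshift: "p (y - b) = p y * exp (lossv P b y)" for y
  proof -
    have "(y - b) \<bullet> (P *v (y - b)) = y \<bullet> (P *v y) - 2 * (b \<bullet> (P *v y)) + b \<bullet> (P *v b)"
      using sym_inner[of P y b, OF F(3)]
      by (simp add: matrix_vector_mult_diff_distrib inner_diff_left inner_diff_right)
    then show ?thesis
      by (simp add: p_def lossv_def exp_add[symmetric] mult.assoc field_simps)
  qed
  have "(\<integral>\<^sup>+x. K (x + b) \<partial>mvnormal R) = (\<integral>\<^sup>+x. ennreal (p x) * K (x + b) \<partial>lborel)"
    unfolding mv by (rule nn_integral_density) measurable
  also have "\<dots> = (\<integral>\<^sup>+x. ennreal (p ((b + x) - b)) * K (b + x) \<partial>lborel)"
    by (simp add: add.commute)
  also have "\<dots> = (\<integral>\<^sup>+y. ennreal (p (y - b)) * K y \<partial>distr lborel borel ((+) b))"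
    by (rule nn_integral_distr[symmetric]) measurable
  also have "\<dots> = (\<integral>\<^sup>+y. ennreal (p (y - b)) * K y \<partial>lborel)"
    by (simp add: lborel_distr_plus)
  also have "\<dots> = (\<integral>\<^sup>+y. ennreal (p y) * (K y * ennreal (exp (lossv P b y))) \<partial>lborel)"
    by (intro nn_integral_cong) (simp add: pshift ennreal_mult p_nn mult_ac)
  also have "\<dots> = (\<integral>\<^sup>+y. K y * ennreal (exp (lossv P b y)) \<partial>mvnormal R)"
    unfolding mv by (rule nn_integral_density[symmetric]) (simp_all add: lossv_def)
  finally show ?thesis by (simp add: P_def)
qed



lemma tr_meas[measurable]:
  "(\<lambda>f. \<chi> i. \<chi> k. f k $ i :: real^'d::finite^'n::finite) \<in> borel_measurable (PiM UNIV (\<lambda>_::'d. mvnormal (R::real^'n^'n)))"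
proof (rule borel_measurable_vec, rule borel_measurable_vec)
  fix i k
  have "(\<lambda>f. f k) \<in> PiM UNIV (\<lambda>_::'d. mvnormal R) \<rightarrow>\<^sub>M mvnormal R" by simp
  then have "(\<lambda>f. f k) \<in> borel_measurable (PiM UNIV (\<lambda>_::'d. mvnormal R))"
    by (simp cong: measurable_cong_sets)
  then show "(\<lambda>x. (\<chi> i. \<chi> k. x k $ i) $ i $ k) \<in> borel_measurable (PiM UNIV (\<lambda>_::'d. mvnormal R))"
    by simp
qed

lemma col_meas[measurable]: "(\<lambda>V::real^'d::finite^'n::finite. col V k) \<in> borel_measurable borel"
proof (rule borel_measurable_vec)
  fix i
  have "(\<lambda>V::real^'d^'n. V $ i $ k) \<in> borel_measurable borel" by measurable
  then show "(\<lambda>V::real^'d^'n. col V k $ i) \<in> borel_measurable borel" by (simp add: col_def)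
qed

lemma lossm_meas[measurable]: "lossm P b \<in> borel_measurable borel"
  unfolding lossm_def lossv_def by measurable

lemma sets_noise[simp, measurable_cong]: "sets (noise_dist R) = sets borel"
  by (simp add: noise_dist_def)

lemma noise_prob:
  assumes "pos_def_mat R"
  shows "prob_space (noise_dist R)"
proof -
  interpret prob_space "PiM UNIV (\<lambda>_::'d. mvnormal R)"
    by (rule prob_space_PiM) (use mvnormal_facts(2)[OF assms] in auto)
  show ?thesis unfolding noise_dist_def by (rule prob_space_distr) simp
qed

lemma noise_shift:
  fixes R :: "real^'n::finite^'n" and b :: "real^'d::finite^'n"
  assumes R: "pos_def_mat R" and K[measurable]: "K \<in> borel_measurable borel"
  shows "(\<integral>\<^sup>+V. K (V + b) \<partial>noise_dist R) = (\<integral>\<^sup>+V. K V * ennreal (exp (lossm (matrix_inv R) b V)) \<partial>noise_dist R)"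
proof -
  define P where "P = matrix_inv R"
  let ?tr = "\<lambda>f. \<chi> i. \<chi> k. f k $ i :: real^'d^'n"
  let ?M = "PiM UNIV (\<lambda>_::'d. mvnormal R)"
  interpret product_sigma_finite "\<lambda>_::'d. mvnormal R"
    by (simp add: product_sigma_finite_def prob_space_imp_sigma_finite mvnormal_facts(2)[OF R])
  have "(\<integral>\<^sup>+V. K (V + b) \<partial>noise_dist R) = (\<integral>\<^sup>+f. K (?tr f + b) \<partial>?M)"
    unfolding noise_dist_def by (rule nn_integral_distr) measurable
  also have "\<dots> = (\<integral>\<^sup>+f. K (?tr (restrict (\<lambda>k. f k + col b k) UNIV)) \<partial>?M)"
    by (intro nn_integral_cong arg_cong[where f=K]) (simp add: vec_eq_iff col_def restrict_UNIV)
  also have "\<dots> = (\<integral>\<^sup>+f. K (?tr f) * (\<Prod>k\<in>UNIV. ennreal (exp (lossv P (col b k) (f k)))) \<partial>?M)"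
  proof (rule PiM_shift[where G="\<lambda>f. K (?tr f)"])
    show "product_sigma_finite (\<lambda>_::'d. mvnormal R)" by unfold_locales
    fix i :: 'd and g :: "real^'n \<Rightarrow> ennreal"
    assume g: "g \<in> borel_measurable (mvnormal R)"
    then have [measurable]: "g \<in> borel_measurable borel" by (simp cong: measurable_cong_sets)
    show "(\<integral>\<^sup>+y. g (y + col b i) \<partial>mvnormal R) = (\<integral>\<^sup>+y. g y * ennreal (exp (lossv P (col b i) y)) \<partial>mvnormal R)"
      unfolding P_def by (rule mvnormal_shift[OF R]) measurable
  qed (simp_all add: lossv_def cong: measurable_cong_sets)
  also have "\<dots> = (\<integral>\<^sup>+f. K (?tr f) * ennreal (exp (lossm P b (?tr f))) \<partial>?M)"
  proof (intro nn_integral_cong arg_cong2[where f="(*)"] refl)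
    fix f :: "'d \<Rightarrow> real^'n"
    have "col (?tr f) k = f k" for k by (simp add: col_def vec_eq_iff)
    then show "(\<Prod>k\<in>UNIV. ennreal (exp (lossv P (col b k) (f k)))) = ennreal (exp (lossm P b (?tr f)))"
      by (simp add: lossm_def exp_sum prod_ennreal)
  qed
  also have "\<dots> = (\<integral>\<^sup>+V. K V * ennreal (exp (lossm P b V)) \<partial>noise_dist R)"
    unfolding noise_dist_def by (rule nn_integral_distr[symmetric]) measurable
  finally show ?thesis by (simp add: P_def)
qed



primrec gtraj :: "(nat \<Rightarrow> real^'d::finite^'n::finite \<Rightarrow> real^'d^'n) \<Rightarrow> real^'n^'n \<Rightarrow> (nat \<Rightarrow> real)
   \<Rightarrow> real^'d^'n \<Rightarrow> (nat \<Rightarrow> real^'d^'n) \<Rightarrow> nat \<Rightarrow> real^'d^'n" where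
  "gtraj g W \<eta> x0 V 0 = x0"
| "gtraj g W \<eta> x0 V (Suc t) = W ** (gtraj g W \<eta> x0 V t - \<eta> t *\<^sub>R (g t (gtraj g W \<eta> x0 V t) + V t))"

lemma gtraj_cong: "(\<And>s. s < t \<Longrightarrow> V s = V' s) \<Longrightarrow> gtraj g W \<eta> x0 V t = gtraj g W \<eta> x0 V' t"
  by (induction t) auto

lemma mmult_meas[measurable]:
  fixes W :: "real^'n::finite^'m::finite"
  shows "(\<lambda>X::real^'d::finite^'n. W ** X) \<in> borel_measurable borel"
proof (rule borel_measurable_vec, rule borel_measurable_vec)
  fix i k
  have "(\<lambda>X::real^'d^'n. \<Sum>l\<in>UNIV. W$i$l * X$l$k) \<in> borel_measurable borel" by measurable
  then show "(\<lambda>X::real^'d^'n. (W ** X) $ i $ k) \<in> borel_measurable borel"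
    by (simp add: matrix_matrix_mult_def)
qed

lemma gtraj_meas:
  assumes g[measurable]: "\<And>t. g t \<in> borel_measurable borel"
  shows "t \<le> T \<Longrightarrow> (\<lambda>V. gtraj g W \<eta> x0 V t) \<in> borel_measurable (PiM {..<T} (\<lambda>_. noise_dist R))"
proof (induction t)
  case 0
  then show ?case by simp
next
  case (Suc t)
  then have [measurable]: "(\<lambda>V. gtraj g W \<eta> x0 V t) \<in> borel_measurable (PiM {..<T} (\<lambda>_. noise_dist R))" by simp
  have "(\<lambda>V. V t) \<in> PiM {..<T} (\<lambda>_. noise_dist R) \<rightarrow>\<^sub>M noise_dist R"
    using Suc.prems by simp
  then have [measurable]: "(\<lambda>V. V t) \<in> borel_measurable (PiM {..<T} (\<lambda>_. noise_dist R))"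
    by (simp cong: measurable_cong_sets)
  show ?case by simp
qed

lemma gtraj_restrict_meas:
  assumes g[measurable]: "\<And>t. g t \<in> borel_measurable borel"
  shows "(\<lambda>V. restrict (gtraj g W \<eta> x0 V) {..T}) \<in> PiM {..<T} (\<lambda>_. noise_dist R) \<rightarrow>\<^sub>M PiM {..T} (\<lambda>_. borel)"
  by (rule measurable_restrict) (use gtraj_meas[OF g] in auto)



definition Lsum :: "real^'n::finite^'n \<Rightarrow> (nat \<Rightarrow> real^'d::finite^'n \<Rightarrow> real^'d^'n) \<Rightarrow> (nat \<Rightarrow> real^'d^'n \<Rightarrow> real^'d^'n)
   \<Rightarrow> real^'n^'n \<Rightarrow> (nat \<Rightarrow> real) \<Rightarrow> real^'d^'n \<Rightarrow> nat \<Rightarrow> (nat \<Rightarrow> real^'d^'n) \<Rightarrow> real" where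
  "Lsum P g1 g2 W \<eta> x0 T V = (\<Sum>t<T. lossm P (g1 t (gtraj g2 W \<eta> x0 V t) - g2 t (gtraj g2 W \<eta> x0 V t)) (V t))"

lemma Lsum_cong: "(\<And>s. s < T \<Longrightarrow> V s = V' s) \<Longrightarrow> Lsum P g1 g2 W \<eta> x0 T V = Lsum P g1 g2 W \<eta> x0 T V'"
  unfolding Lsum_def
proof (intro sum.cong refl)
  fix t assume eq: "V s = V' s" if "s < T" for s
  assume "t \<in> {..<T}"
  then show "lossm P (g1 t (gtraj g2 W \<eta> x0 V t) - g2 t (gtraj g2 W \<eta> x0 V t)) (V t) =
       lossm P (g1 t (gtraj g2 W \<eta> x0 V' t) - g2 t (gtraj g2 W \<eta> x0 V' t)) (V' t)"
    using gtraj_cong[of t V V' g2 W \<eta> x0] eq by auto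
qed

lemma Lsum_Suc: "Lsum P g1 g2 W \<eta> x0 (Suc T) V = Lsum P g1 g2 W \<eta> x0 T V
   + lossm P (g1 T (gtraj g2 W \<eta> x0 V T) - g2 T (gtraj g2 W \<eta> x0 V T)) (V T)"
  by (simp add: Lsum_def)

lemma col_meas_raw[measurable (raw)]:
  "f \<in> borel_measurable M \<Longrightarrow> (\<lambda>x. col (f x) k) \<in> borel_measurable M"
  using measurable_compose[OF _ col_meas] by blast

lemma mvmult_meas_raw[measurable (raw)]:
  fixes P :: "real^'m::finite^'n::finite"
  shows "f \<in> borel_measurable M \<Longrightarrow> (\<lambda>x. P *v f x) \<in> borel_measurable M"
  using measurable_compose[OF _ mvmult_meas] by blast

lemma lossm_meas2[measurable (raw)]:
  "f \<in> borel_measurable M \<Longrightarrow> h \<in> borel_measurable M \<Longrightarrow> (\<lambda>x. lossm P (f x) (h x)) \<in> borel_measurable M"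
proof -
  assume f: "f \<in> borel_measurable M" and h: "h \<in> borel_measurable M"
  show ?thesis unfolding lossm_def lossv_def
  proof (intro borel_measurable_sum borel_measurable_diff borel_measurable_inner borel_measurable_divide borel_measurable_const)
    fix k
    show cf: "(\<lambda>x. col (f x) k) \<in> borel_measurable M" using f by measurable
    show "(\<lambda>x. col (f x) k) \<in> borel_measurable M" using f by measurable
    have ch: "(\<lambda>x. col (h x) k) \<in> borel_measurable M" using h by measurable
    show "(\<lambda>x. P *v col (h x) k) \<in> borel_measurable M" using measurable_compose[OF ch mvmult_meas] .
    show "(\<lambda>x. P *v col (f x) k) \<in> borel_measurable M" using measurable_compose[OF cf mvmult_meas] .
  qed
qed

lemma Lsum_meas[measurable]:
  assumes g1[measurable]: "\<And>t. g1 t \<in> borel_measurable borel"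
    and g2[measurable]: "\<And>t. g2 t \<in> borel_measurable borel"
  shows "Lsum P g1 g2 W \<eta> x0 T \<in> borel_measurable (PiM {..<T} (\<lambda>_. noise_dist R))"
proof -
  have [measurable]: "(\<lambda>V. gtraj g2 W \<eta> x0 V t) \<in> borel_measurable (PiM {..<T} (\<lambda>_. noise_dist R))" if "t < T" for t
    using gtraj_meas[OF g2, of t T] that by simp
  have [measurable]: "(\<lambda>V. V t) \<in> borel_measurable (PiM {..<T} (\<lambda>_. noise_dist R))" if "t < T" for t
  proof -
    have "(\<lambda>V. V t) \<in> PiM {..<T} (\<lambda>_. noise_dist R) \<rightarrow>\<^sub>M noise_dist R" using that by simp
    then show ?thesis by (simp cong: measurable_cong_sets)
  qed
  show ?thesis unfolding Lsum_def
  proof (rule borel_measurable_sum)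
    fix t assume "t \<in> {..<T}"
    then have t: "t < T" by simp
    note [measurable] = \<open>\<And>t. t < T \<Longrightarrow> (\<lambda>V. gtraj g2 W \<eta> x0 V t) \<in> _\<close>[OF t] \<open>\<And>t. t < T \<Longrightarrow> (\<lambda>V. V t) \<in> _\<close>[OF t]
    show "(\<lambda>V. lossm P (g1 t (gtraj g2 W \<eta> x0 V t) - g2 t (gtraj g2 W \<eta> x0 V t)) (V t)) \<in> borel_measurable (PiM {..<T} (\<lambda>_. noise_dist R))"
      by measurable
  qed
qed



lemma step_meas:
  fixes g :: "nat \<Rightarrow> real^'d::finite^'n::finite \<Rightarrow> real^'d^'n"
  assumes g[measurable]: "\<And>t. g t \<in> borel_measurable borel"
  shows "(\<lambda>(z, y). z(Suc T := W ** (z T - \<eta> T *\<^sub>R (g T (z T) + y))))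
     \<in> PiM {..T} (\<lambda>_. borel) \<Otimes>\<^sub>M noise_dist R \<rightarrow>\<^sub>M PiM {..Suc T} (\<lambda>_. borel :: (real^'d^'n) measure)"
proof -
  have zT[measurable]: "(\<lambda>z. z T) \<in> PiM {..T} (\<lambda>_. borel :: (real^'d^'n) measure) \<rightarrow>\<^sub>M borel" by simp
  have sn[measurable]: "(\<lambda>y::real^'d^'n. y) \<in> noise_dist R \<rightarrow>\<^sub>M borel"
    by (simp cong: measurable_cong_sets)
  have 1: "(\<lambda>p. (fst p, W ** (fst p T - \<eta> T *\<^sub>R (g T (fst p T) + snd p))))
     \<in> PiM {..T} (\<lambda>_. borel) \<Otimes>\<^sub>M noise_dist R \<rightarrow>\<^sub>M PiM {..T} (\<lambda>_. borel) \<Otimes>\<^sub>M (borel :: (real^'d^'n) measure)"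
    by measurable
  have 2: "(\<lambda>(f, y). f(Suc T := y)) \<in> PiM {..T} (\<lambda>_. borel) \<Otimes>\<^sub>M (borel :: (real^'d^'n) measure)
      \<rightarrow>\<^sub>M PiM (insert (Suc T) {..T}) (\<lambda>_. borel)"
    by (rule measurable_add_dim)
  have "insert (Suc T) {..T} = {..Suc T}" by auto
  with measurable_comp[OF 1 2] show ?thesis by (simp add: comp_def case_prod_beta)
qed



lemma traj_ident:
  fixes R :: "real^'n::finite^'n" and g1 g2 :: "nat \<Rightarrow> real^'d::finite^'n \<Rightarrow> real^'d^'n"
  assumes R: "pos_def_mat R"
    and g1[measurable]: "\<And>t. g1 t \<in> borel_measurable borel"
    and g2[measurable]: "\<And>t. g2 t \<in> borel_measurable borel"
  shows "H \<in> borel_measurable (PiM {..T} (\<lambda>_. borel)) \<Longrightarrow>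
    (\<integral>\<^sup>+V. H (restrict (gtraj g1 W \<eta> x0 V) {..T}) \<partial>PiM {..<T} (\<lambda>_. noise_dist R))
    = (\<integral>\<^sup>+V. H (restrict (gtraj g2 W \<eta> x0 V) {..T}) * ennreal (exp (Lsum (matrix_inv R) g1 g2 W \<eta> x0 T V))
        \<partial>PiM {..<T} (\<lambda>_. noise_dist R))"
proof (induction T arbitrary: H)
  case 0
  have r: "restrict (gtraj g1 W \<eta> x0 V) {..0} = restrict (gtraj g2 W \<eta> x0 V) {..0}" for V
    by (auto simp: restrict_def fun_eq_iff)
  show ?case by (simp only: r) (simp add: Lsum_def)
next
  case (Suc T)
  define P where "P = matrix_inv R"
  let ?N = "\<lambda>T. PiM {..<T} (\<lambda>_. noise_dist R)"
  let ?Y1 = "gtraj g1 W \<eta> x0" and ?Y2 = "gtraj g2 W \<eta> x0"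
  let ?L = "Lsum P g1 g2 W \<eta> x0"
  interpret nd: prob_space "noise_dist R :: (real^'d^'n) measure" by (rule noise_prob[OF R])
  interpret psf: product_sigma_finite "\<lambda>_::nat. noise_dist R"
    by (simp add: product_sigma_finite_def prob_space_imp_sigma_finite noise_prob[OF R])
  have ins: "{..<Suc T} = insert T {..<T}" by auto
  note H[measurable] = Suc.prems
  define step where "step g z y = z(Suc T := W ** (z T - \<eta> T *\<^sub>R (g T (z T) + y)))"
    for g :: "nat \<Rightarrow> real^'d^'n \<Rightarrow> real^'d^'n" and z y
  have step1[measurable]: "(\<lambda>(z, y). step g1 z y) \<in> PiM {..T} (\<lambda>_. borel) \<Otimes>\<^sub>M noise_dist R \<rightarrow>\<^sub>M PiM {..Suc T} (\<lambda>_. borel)"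
    unfolding step_def by (rule step_meas[OF g1])
  have step2[measurable]: "(\<lambda>(z, y). step g2 z y) \<in> PiM {..T} (\<lambda>_. borel) \<Otimes>\<^sub>M noise_dist R \<rightarrow>\<^sub>M PiM {..Suc T} (\<lambda>_. borel)"
    unfolding step_def by (rule step_meas[OF g2])
  define J where "J z = (\<integral>\<^sup>+y. H (step g2 z y) * ennreal (exp (lossm P (g1 T (z T) - g2 T (z T)) y)) \<partial>noise_dist R)" for z
  have J_meas[measurable]: "J \<in> borel_measurable (PiM {..T} (\<lambda>_. borel))"
  proof -
    have zT[measurable]: "(\<lambda>z. z T) \<in> PiM {..T} (\<lambda>_. borel :: (real^'d^'n) measure) \<rightarrow>\<^sub>M borel" by simp
    have sn[measurable]: "(\<lambda>y::real^'d^'n. y) \<in> noise_dist R \<rightarrow>\<^sub>M borel"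
      by (simp cong: measurable_cong_sets)
    have "(\<lambda>p. H (step g2 (fst p) (snd p))) \<in> borel_measurable (PiM {..T} (\<lambda>_. borel) \<Otimes>\<^sub>M noise_dist R)"
      using measurable_compose[OF step2 H] by (simp add: case_prod_beta)
    moreover have "(\<lambda>p. ennreal (exp (lossm P (g1 T (fst p T) - g2 T (fst p T)) (snd p))))
        \<in> borel_measurable (PiM {..T} (\<lambda>_. borel) \<Otimes>\<^sub>M noise_dist R)"
      by measurable
    ultimately have "(\<lambda>(z, y). H (step g2 z y) * ennreal (exp (lossm P (g1 T (z T) - g2 T (z T)) y)))
        \<in> borel_measurable (PiM {..T} (\<lambda>_. borel) \<Otimes>\<^sub>M noise_dist R)"
      by (simp add: case_prod_beta)
    then show ?thesis unfolding J_def by (rule nd.borel_measurable_nn_integral)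
  qed
  have Y1meas: "(\<lambda>V. restrict (?Y1 V) {..Suc T}) \<in> PiM (insert T {..<T}) (\<lambda>_. noise_dist R) \<rightarrow>\<^sub>M PiM {..Suc T} (\<lambda>_. borel)"
    using gtraj_restrict_meas[OF g1, where T="Suc T" and R=R] by (simp add: ins)
  have Y2meas: "(\<lambda>V. restrict (?Y2 V) {..Suc T}) \<in> PiM (insert T {..<T}) (\<lambda>_. noise_dist R) \<rightarrow>\<^sub>M PiM {..Suc T} (\<lambda>_. borel)"
    using gtraj_restrict_meas[OF g2, where T="Suc T" and R=R] by (simp add: ins)
  have Lmeas: "?L (Suc T) \<in> borel_measurable (PiM (insert T {..<T}) (\<lambda>_. noise_dist R))"
    using Lsum_meas[OF g1 g2, where T="Suc T" and R=R and P=P] by (simp add: ins)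
  have upd: "restrict (gtraj g W \<eta> x0 (x(T := y))) {..Suc T} = step g (restrict (gtraj g W \<eta> x0 x) {..T}) y" for g x y
  proof
    fix t
    have le: "s \<le> T \<Longrightarrow> gtraj g W \<eta> x0 (x(T := y)) s = gtraj g W \<eta> x0 x s" for s
      by (rule gtraj_cong) auto
    show "restrict (gtraj g W \<eta> x0 (x(T := y))) {..Suc T} t = step g (restrict (gtraj g W \<eta> x0 x) {..T}) y t"
      by (cases "t \<le> T"; cases "t = Suc T") (auto simp: step_def le)
  qed
  have "(\<integral>\<^sup>+V. H (restrict (?Y1 V) {..Suc T}) \<partial>?N (Suc T))
      = (\<integral>\<^sup>+x. (\<integral>\<^sup>+y. H (restrict (?Y1 (x(T := y))) {..Suc T}) \<partial>noise_dist R) \<partial>?N T)"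
    unfolding ins by (rule psf.product_nn_integral_insert) (use Y1meas in auto)
  also have "\<dots> = (\<integral>\<^sup>+x. J (restrict (?Y1 x) {..T}) \<partial>?N T)"
  proof (intro nn_integral_cong)
    fix x
    define z where "z = restrict (?Y1 x) {..T}"
    have z: "z \<in> space (PiM {..T} (\<lambda>_. borel))" by (simp add: z_def space_PiM)
    have K: "(\<lambda>y. H (step g2 z y)) \<in> borel_measurable borel"
    proof -
      have "(\<lambda>y. step g2 z y) \<in> noise_dist R \<rightarrow>\<^sub>M PiM {..Suc T} (\<lambda>_. borel)"
        using measurable_compose_Pair1[OF z step2] by simp
      then have "(\<lambda>y. H (step g2 z y)) \<in> borel_measurable (noise_dist R)" by measurable
      then show ?thesis by (simp cong: measurable_cong_sets)
    qed
    have "(\<integral>\<^sup>+y. H (restrict (?Y1 (x(T := y))) {..Suc T}) \<partial>noise_dist R)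
        = (\<integral>\<^sup>+y. H (step g2 z (y + (g1 T (z T) - g2 T (z T)))) \<partial>noise_dist R)"
      unfolding upd z_def[symmetric] by (intro nn_integral_cong) (simp add: step_def algebra_simps)
    also have "\<dots> = J z"
      unfolding J_def P_def by (rule noise_shift[OF R K])
    finally show "(\<integral>\<^sup>+y. H (restrict (?Y1 (x(T := y))) {..Suc T}) \<partial>noise_dist R) = J (restrict (?Y1 x) {..T})"
      by (simp add: z_def)
  qed
  also have "\<dots> = (\<integral>\<^sup>+x. J (restrict (?Y2 x) {..T}) * ennreal (exp (?L T x)) \<partial>?N T)"
    unfolding P_def by (rule Suc.IH) (rule J_meas)
  also have "\<dots> = (\<integral>\<^sup>+x. (\<integral>\<^sup>+y. H (restrict (?Y2 (x(T := y))) {..Suc T}) * ennreal (exp (?L (Suc T) (x(T := y))))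
       \<partial>noise_dist R) \<partial>?N T)"
  proof (intro nn_integral_cong)
    fix x
    define z where "z = restrict (?Y2 x) {..T}"
    have z: "z \<in> space (PiM {..T} (\<lambda>_. borel))" by (simp add: z_def space_PiM)
    have Lupd: "?L (Suc T) (x(T := y)) = ?L T x + lossm P (g1 T (z T) - g2 T (z T)) y" for y
    proof -
      have "?L T (x(T := y)) = ?L T x" by (rule Lsum_cong) auto
      moreover have "?Y2 (x(T := y)) T = ?Y2 x T" by (rule gtraj_cong) auto
      ultimately show ?thesis by (simp add: Lsum_Suc z_def)
    qed
    have meas: "(\<lambda>y. H (step g2 z y) * ennreal (exp (lossm P (g1 T (z T) - g2 T (z T)) y))) \<in> borel_measurable (noise_dist R)"
    proof -
      have "(\<lambda>y. step g2 z y) \<in> noise_dist R \<rightarrow>\<^sub>M PiM {..Suc T} (\<lambda>_. borel)"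
        using measurable_compose_Pair1[OF z step2] by simp
      moreover have "(\<lambda>y::real^'d^'n. y) \<in> noise_dist R \<rightarrow>\<^sub>M borel"
        by (simp cong: measurable_cong_sets)
      ultimately show ?thesis by measurable
    qed
    have "J z * ennreal (exp (?L T x))
       = (\<integral>\<^sup>+y. H (step g2 z y) * ennreal (exp (lossm P (g1 T (z T) - g2 T (z T)) y)) * ennreal (exp (?L T x)) \<partial>noise_dist R)"
      unfolding J_def by (rule nn_integral_multc[symmetric]) (rule meas)
    also have "\<dots> = (\<integral>\<^sup>+y. H (restrict (?Y2 (x(T := y))) {..Suc T}) * ennreal (exp (?L (Suc T) (x(T := y)))) \<partial>noise_dist R)"
      unfolding upd z_def[symmetric] Lupd
      by (intro nn_integral_cong) (simp add: exp_add ennreal_mult mult_ac)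
    finally show "J (restrict (?Y2 x) {..T}) * ennreal (exp (?L T x)) =
       (\<integral>\<^sup>+y. H (restrict (?Y2 (x(T := y))) {..Suc T}) * ennreal (exp (?L (Suc T) (x(T := y)))) \<partial>noise_dist R)"
      by (simp add: z_def)
  qed
  also have "\<dots> = (\<integral>\<^sup>+V. H (restrict (?Y2 V) {..Suc T}) * ennreal (exp (?L (Suc T) V)) \<partial>?N (Suc T))"
    unfolding ins by (rule psf.product_nn_integral_insert[symmetric]) (use Y2meas Lmeas in auto)
  finally show ?case by (simp only: P_def)
qed



definition Bq :: "real^'n::finite^'n \<Rightarrow> real^'d::finite^'n \<Rightarrow> real" where
  "Bq P b = (\<Sum>k\<in>UNIV. col b k \<bullet> (P *v col b k))"

lemma noise_mgf:
  fixes R :: "real^'n::finite^'n" and b :: "real^'d::finite^'n"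
  assumes R: "pos_def_mat R"
  shows "(\<integral>\<^sup>+V. ennreal (exp (\<mu> * lossm (matrix_inv R) b V)) \<partial>noise_dist R)
       = ennreal (exp ((\<mu>\<^sup>2 - \<mu>) * Bq (matrix_inv R) b / 2))"
proof -
  define P where "P = matrix_inv R"
  interpret nd: prob_space "noise_dist R :: (real^'d^'n) measure" by (rule noise_prob[OF R])
  define c where "c = (\<mu>\<^sup>2 - \<mu>) * Bq P b / 2"
  have colm: "col (\<mu> *\<^sub>R b) k = \<mu> *\<^sub>R col b k" for k by (simp add: col_def vec_eq_iff)
  have l1: "lossm P b V = (\<Sum>k\<in>UNIV. col b k \<bullet> (P *v col V k)) - Bq P b / 2" for b V
    by (simp add: lossm_def lossv_def Bq_def sum_subtractf sum_divide_distrib)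
  have l2: "(\<Sum>k\<in>UNIV. col (\<mu> *\<^sub>R b) k \<bullet> (P *v col V k)) = \<mu> * (\<Sum>k\<in>UNIV. col b k \<bullet> (P *v col V k))" for V
    by (simp add: colm sum_distrib_left)
  have l3: "Bq P (\<mu> *\<^sub>R b) = \<mu>\<^sup>2 * Bq P b"
    by (simp add: Bq_def colm matrix_vector_mult_scaleR sum_distrib_left power2_eq_square mult.assoc)
  have eq: "\<mu> * lossm P b V = lossm P (\<mu> *\<^sub>R b) V + c" for V
    unfolding l1 l2 l3 c_def by (simp add: field_simps power2_eq_square)
  have a: "(\<integral>\<^sup>+(V::real^'d^'n). (1::ennreal) \<partial>noise_dist R) = (\<integral>\<^sup>+V. 1 * ennreal (exp (lossm P (\<mu> *\<^sub>R b) V)) \<partial>noise_dist R)"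
    using noise_shift[OF R, of "\<lambda>_. 1" "\<mu> *\<^sub>R b"] unfolding P_def by simp
  have b: "(\<integral>\<^sup>+(V::real^'d^'n). (1::ennreal) \<partial>noise_dist R) = 1" by (simp add: nd.emeasure_space_1)
  have one: "(\<integral>\<^sup>+V. ennreal (exp (lossm P (\<mu> *\<^sub>R b) V)) \<partial>noise_dist R) = 1"
    using a b by simp
  have "(\<integral>\<^sup>+V. ennreal (exp (\<mu> * lossm P b V)) \<partial>noise_dist R)
      = (\<integral>\<^sup>+V. ennreal (exp (lossm P (\<mu> *\<^sub>R b) V)) * ennreal (exp c) \<partial>noise_dist R)"
    by (intro nn_integral_cong) (simp add: eq exp_add ennreal_mult)
  also have "\<dots> = ennreal (exp c)"
    by (subst nn_integral_multc) (simp_all add: one)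
  finally show ?thesis by (simp add: P_def c_def)
qed



lemma traj_mgf:
  fixes R :: "real^'n::finite^'n" and g1 g2 :: "nat \<Rightarrow> real^'d::finite^'n \<Rightarrow> real^'d^'n"
  assumes R: "pos_def_mat R"
    and g1[measurable]: "\<And>t. g1 t \<in> borel_measurable borel"
    and g2[measurable]: "\<And>t. g2 t \<in> borel_measurable borel"
    and mu: "\<mu>\<^sup>2 - \<mu> \<ge> 0"
    and bnd: "\<And>t X. Bq (matrix_inv R) (g1 t X - g2 t X) \<le> \<beta>"
  shows "(\<integral>\<^sup>+V. ennreal (exp (\<mu> * Lsum (matrix_inv R) g1 g2 W \<eta> x0 T V)) \<partial>PiM {..<T} (\<lambda>_. noise_dist R))
     \<le> ennreal (exp ((\<mu>\<^sup>2 - \<mu>) * \<beta> / 2 * real T))"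
proof (induction T)
  case 0
  show ?case by (simp add: Lsum_def PiM_empty nn_integral_count_space_finite)
next
  case (Suc T)
  define P where "P = matrix_inv R"
  let ?N = "\<lambda>T. PiM {..<T} (\<lambda>_. noise_dist R)"
  let ?Y2 = "gtraj g2 W \<eta> x0"
  let ?L = "Lsum P g1 g2 W \<eta> x0"
  define c where "c = (\<mu>\<^sup>2 - \<mu>) * \<beta> / 2"
  interpret nd: prob_space "noise_dist R :: (real^'d^'n) measure" by (rule noise_prob[OF R])
  interpret psf: product_sigma_finite "\<lambda>_::nat. noise_dist R :: (real^'d^'n) measure"
    by (simp add: product_sigma_finite_def prob_space_imp_sigma_finite noise_prob[OF R])
  have ins: "{..<Suc T} = insert T {..<T}" by auto
  have Lmeas: "?L (Suc T) \<in> borel_measurable (PiM (insert T {..<T}) (\<lambda>_. noise_dist R))"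
    using Lsum_meas[OF g1 g2, where T="Suc T" and R=R and P=P] by (simp add: ins)
  have LmeasT[measurable]: "?L T \<in> borel_measurable (?N T)"
    using Lsum_meas[OF g1 g2, where T="T" and R=R and P=P] by simp
  have "(\<integral>\<^sup>+V. ennreal (exp (\<mu> * ?L (Suc T) V)) \<partial>?N (Suc T))
      = (\<integral>\<^sup>+x. (\<integral>\<^sup>+y. ennreal (exp (\<mu> * ?L (Suc T) (x(T := y)))) \<partial>noise_dist R) \<partial>?N T)"
    unfolding ins by (rule psf.product_nn_integral_insert) (use Lmeas in auto)
  also have "\<dots> = (\<integral>\<^sup>+x. ennreal (exp (\<mu> * ?L T x)) * ennreal (exp ((\<mu>\<^sup>2 - \<mu>) * Bq P (g1 T (?Y2 x T) - g2 T (?Y2 x T)) / 2)) \<partial>?N T)"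
  proof (intro nn_integral_cong)
    fix x
    define a where "a = g1 T (?Y2 x T) - g2 T (?Y2 x T)"
    have Lupd: "?L (Suc T) (x(T := y)) = ?L T x + lossm P a y" for y
    proof -
      have "?L T (x(T := y)) = ?L T x" by (rule Lsum_cong) auto
      moreover have "?Y2 (x(T := y)) T = ?Y2 x T" by (rule gtraj_cong) auto
      ultimately show ?thesis by (simp add: Lsum_Suc a_def)
    qed
    have "(\<integral>\<^sup>+y. ennreal (exp (\<mu> * ?L (Suc T) (x(T := y)))) \<partial>noise_dist R)
        = (\<integral>\<^sup>+y. ennreal (exp (\<mu> * ?L T x)) * ennreal (exp (\<mu> * lossm P a y)) \<partial>noise_dist R)"
      by (intro nn_integral_cong) (simp add: Lupd distrib_left exp_add ennreal_mult)
    also have "\<dots> = ennreal (exp (\<mu> * ?L T x)) * (\<integral>\<^sup>+y. ennreal (exp (\<mu> * lossm P a y)) \<partial>noise_dist R)"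
      by (rule nn_integral_cmult) measurable
    also have "(\<integral>\<^sup>+y. ennreal (exp (\<mu> * lossm P a y)) \<partial>noise_dist R) = ennreal (exp ((\<mu>\<^sup>2 - \<mu>) * Bq P a / 2))"
      unfolding P_def by (rule noise_mgf[OF R])
    finally show "(\<integral>\<^sup>+y. ennreal (exp (\<mu> * ?L (Suc T) (x(T := y)))) \<partial>noise_dist R)
        = ennreal (exp (\<mu> * ?L T x)) * ennreal (exp ((\<mu>\<^sup>2 - \<mu>) * Bq P (g1 T (?Y2 x T) - g2 T (?Y2 x T)) / 2))"
      by (simp only: a_def)
  qed
  also have "\<dots> \<le> (\<integral>\<^sup>+x. ennreal (exp (\<mu> * ?L T x)) * ennreal (exp c) \<partial>?N T)"
  proof (intro nn_integral_mono mult_left_mono)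
    fix x
    have "(\<mu>\<^sup>2 - \<mu>) * Bq P (g1 T (?Y2 x T) - g2 T (?Y2 x T)) \<le> (\<mu>\<^sup>2 - \<mu>) * \<beta>"
      using bnd[of T "?Y2 x T"] mu unfolding P_def by (intro mult_left_mono) auto
    then show "ennreal (exp ((\<mu>\<^sup>2 - \<mu>) * Bq P (g1 T (?Y2 x T) - g2 T (?Y2 x T)) / 2)) \<le> ennreal (exp c)"
      unfolding c_def by (intro ennreal_leI) simp
  qed simp
  also have "\<dots> = (\<integral>\<^sup>+x. ennreal (exp (\<mu> * ?L T x)) \<partial>?N T) * ennreal (exp c)"
    by (rule nn_integral_multc) measurable
  also have "\<dots> \<le> ennreal (exp (c * real T)) * ennreal (exp c)"
    using Suc.IH unfolding c_def P_def by (intro mult_right_mono) auto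
  also have "\<dots> = ennreal (exp (c * real (Suc T)))"
    by (simp add: ennreal_mult[symmetric] exp_add[symmetric] distrib_left)
  finally show ?case by (simp add: c_def P_def)
qed



lemma eps_arith:
  fixes \<rho> \<delta> :: real
  assumes \<rho>: "\<rho> > 0" and \<delta>: "0 < \<delta>" "\<delta> < 1"
  defines "l \<equiv> sqrt (ln (1 / \<delta>) / \<rho>)"
  shows "- l * (\<rho> + 2 * sqrt (\<rho> * ln (1 / \<delta>))) + l * (1 + l) * \<rho> = ln \<delta>"
proof -
  define Lg where "Lg = ln (1 / \<delta>)"
  have Lg: "Lg > 0" using \<delta> by (simp add: Lg_def)
  have l2: "l * l * \<rho> = Lg" using \<rho> Lg by (simp add: l_def Lg_def[symmetric])
  have l3: "l * sqrt (\<rho> * Lg) = Lg"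
  proof -
    have "l * sqrt (\<rho> * Lg) = sqrt (Lg / \<rho> * (\<rho> * Lg))" unfolding l_def Lg_def[symmetric] by (rule real_sqrt_mult[symmetric])
    also have "Lg / \<rho> * (\<rho> * Lg) = Lg\<^sup>2" using \<rho> by (simp add: power2_eq_square)
    finally show ?thesis using Lg by simp
  qed
  have "- l * (\<rho> + 2 * sqrt (\<rho> * Lg)) + l * (1 + l) * \<rho> = - 2 * (l * sqrt (\<rho> * Lg)) + l * l * \<rho>"
    by (simp add: algebra_simps)
  also have "\<dots> = - Lg" using l2 l3 by simp
  finally show ?thesis using \<delta> by (simp add: Lg_def ln_div)
qed



lemma traj_dp:
  fixes R :: "real^'n::finite^'n" and g1 g2 :: "nat \<Rightarrow> real^'d::finite^'n \<Rightarrow> real^'d^'n"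
  assumes R: "pos_def_mat R"
    and g1[measurable]: "\<And>t. g1 t \<in> borel_measurable borel"
    and g2[measurable]: "\<And>t. g2 t \<in> borel_measurable borel"
    and bnd: "\<And>t X. Bq (matrix_inv R) (g1 t X - g2 t X) \<le> \<beta>" and \<beta>: "\<beta> > 0"
    and \<delta>: "0 < \<delta>" "\<delta> < 1"
    and S: "S \<in> sets (PiM {..T} (\<lambda>_. borel :: (real^'d^'n) measure))"
  defines "N \<equiv> PiM {..<T} (\<lambda>_. noise_dist R)"
  defines "\<epsilon> \<equiv> \<beta> / 2 * real T + 2 * sqrt (\<beta> / 2 * real T * ln (1 / \<delta>))"
  shows "emeasure N {V \<in> space N. restrict (gtraj g1 W \<eta> x0 V) {..T} \<in> S}
     \<le> ennreal (exp \<epsilon>) * emeasure N {V \<in> space N. restrict (gtraj g2 W \<eta> x0 V) {..T} \<in> S} + ennreal \<delta>"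
proof -
  define P where "P = matrix_inv R"
  let ?Y1 = "\<lambda>V. restrict (gtraj g1 W \<eta> x0 V) {..T}"
  let ?Y2 = "\<lambda>V. restrict (gtraj g2 W \<eta> x0 V) {..T}"
  let ?L = "Lsum P g1 g2 W \<eta> x0 T"
  have Y1m[measurable]: "?Y1 \<in> N \<rightarrow>\<^sub>M PiM {..T} (\<lambda>_. borel)"
    unfolding N_def by (rule gtraj_restrict_meas[OF g1])
  have Y2m[measurable]: "?Y2 \<in> N \<rightarrow>\<^sub>M PiM {..T} (\<lambda>_. borel)"
    unfolding N_def by (rule gtraj_restrict_meas[OF g2])
  have Lm[measurable]: "?L \<in> borel_measurable N"
    unfolding N_def by (rule Lsum_meas[OF g1 g2])
  have [measurable]: "S \<in> sets (PiM {..T} (\<lambda>_. borel))" by (rule S)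
  have eps_nn: "\<epsilon> \<ge> 0" using \<beta> \<delta> by (simp add: \<epsilon>_def)
  have ind: "emeasure N {V \<in> space N. Y V \<in> S} = (\<integral>\<^sup>+V. indicator S (Y V) \<partial>N)"
    if Ym: "Y \<in> N \<rightarrow>\<^sub>M PiM {..T} (\<lambda>_. borel)" for Y
  proof -
    have A: "{V \<in> space N. Y V \<in> S} \<in> sets N" using Ym S by measurable
    have "emeasure N {V \<in> space N. Y V \<in> S} = (\<integral>\<^sup>+V. indicator {V \<in> space N. Y V \<in> S} V \<partial>N)"
      using A by simp
    also have "\<dots> = (\<integral>\<^sup>+V. indicator S (Y V) \<partial>N)"
      by (intro nn_integral_cong) (auto split: split_indicator)
    finally show ?thesis .
  qed
  have "emeasure N {V \<in> space N. ?Y1 V \<in> S} = (\<integral>\<^sup>+V. indicator S (?Y1 V) \<partial>N)"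
    by (rule ind[OF Y1m])
  also have "\<dots> = (\<integral>\<^sup>+V. indicator S (?Y2 V) * ennreal (exp (?L V)) \<partial>N)"
    unfolding N_def P_def by (rule traj_ident[OF R g1 g2]) measurable
  also have "\<dots> \<le> (\<integral>\<^sup>+V. ennreal (exp \<epsilon>) * indicator S (?Y2 V) + indicator {V. ?L V > \<epsilon>} V * ennreal (exp (?L V)) \<partial>N)"
    by (intro nn_integral_mono) (auto split: split_indicator intro!: ennreal_leI)
  also have "\<dots> = ennreal (exp \<epsilon>) * (\<integral>\<^sup>+V. indicator S (?Y2 V) \<partial>N) + (\<integral>\<^sup>+V. indicator {V. ?L V > \<epsilon>} V * ennreal (exp (?L V)) \<partial>N)"
    by (subst nn_integral_add) (auto simp: nn_integral_cmult)
  also have "(\<integral>\<^sup>+V. indicator S (?Y2 V) \<partial>N) = emeasure N {V \<in> space N. ?Y2 V \<in> S}"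
    by (rule ind[OF Y2m, symmetric])
  also have "(\<integral>\<^sup>+V. indicator {V. ?L V > \<epsilon>} V * ennreal (exp (?L V)) \<partial>N) \<le> ennreal \<delta>"
  proof (cases "T = 0")
    case True
    then have "?L V = 0" for V by (simp add: Lsum_def)
    then show ?thesis using eps_nn by simp
  next
    case False
    define \<rho> where "\<rho> = \<beta> / 2 * real T"
    have \<rho>: "\<rho> > 0" using False \<beta> by (simp add: \<rho>_def)
    define l where "l = sqrt (ln (1 / \<delta>) / \<rho>)"
    have Lg: "ln (1 / \<delta>) > 0" using \<delta> by (intro ln_gt_zero) (simp add: field_simps)
    have l: "l \<ge> 0" using Lg \<rho> by (simp add: l_def)
    have "(\<integral>\<^sup>+V. indicator {V. ?L V > \<epsilon>} V * ennreal (exp (?L V)) \<partial>N)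
        \<le> (\<integral>\<^sup>+V. ennreal (exp (- l * \<epsilon>)) * ennreal (exp ((1 + l) * ?L V)) \<partial>N)"
    proof (intro nn_integral_mono)
      fix V
      show "indicator {V. ?L V > \<epsilon>} V * ennreal (exp (?L V)) \<le> ennreal (exp (- l * \<epsilon>)) * ennreal (exp ((1 + l) * ?L V))"
      proof (cases "?L V > \<epsilon>")
        case True
        have "l * \<epsilon> \<le> l * ?L V" using True l by (intro mult_left_mono) auto
        then have "?L V \<le> - l * \<epsilon> + (1 + l) * ?L V"
          by (simp add: algebra_simps)
        then have "exp (?L V) \<le> exp (- l * \<epsilon>) * exp ((1 + l) * ?L V)" by (simp add: exp_add[symmetric])
        then show ?thesis using True by (simp add: ennreal_mult[symmetric] ennreal_leI)
      qed simp
    qed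
    also have "\<dots> = ennreal (exp (- l * \<epsilon>)) * (\<integral>\<^sup>+V. ennreal (exp ((1 + l) * ?L V)) \<partial>N)"
      by (rule nn_integral_cmult) measurable
    also have "\<dots> \<le> ennreal (exp (- l * \<epsilon>)) * ennreal (exp (((1 + l)\<^sup>2 - (1 + l)) * \<beta> / 2 * real T))"
    proof (intro mult_left_mono)
      show "(\<integral>\<^sup>+V. ennreal (exp ((1 + l) * ?L V)) \<partial>N) \<le> ennreal (exp (((1 + l)\<^sup>2 - (1 + l)) * \<beta> / 2 * real T))"
        unfolding N_def P_def
        by (rule traj_mgf[OF R g1 g2 _ bnd]) (use l in \<open>simp add: power2_eq_square algebra_simps\<close>)
    qed simp
    also have "\<dots> = ennreal (exp (- l * \<epsilon> + l * (1 + l) * \<rho>))"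
      by (simp add: ennreal_mult[symmetric] exp_add[symmetric] \<rho>_def power2_eq_square algebra_simps)
    also have "- l * \<epsilon> + l * (1 + l) * \<rho> = ln \<delta>"
      unfolding l_def \<epsilon>_def \<rho>_def[symmetric] by (rule eps_arith[OF \<rho> \<delta>])
    finally show ?thesis using \<delta> by simp
  qed
  finally show ?thesis unfolding restrict_def by (simp add: add_left_mono)
qed



lemma dsgd_gtraj:
  "dsgd_traj sg C W \<eta> x0 D \<xi> V t = gtraj (\<lambda>t X. \<chi> i. clip C (sg t i (D i) (X$i) \<xi>)) W \<eta> x0 V t"
  by (induction t) (simp_all add: Let_def)

lemma clip_norm:
  assumes "C > 0"
  shows "norm (clip C g) \<le> C"
proof (cases "g = 0")
  case True
  then show ?thesis using assms by (simp add: clip_def)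
next
  case False
  then have ng: "norm g > 0" by simp
  have "norm (clip C g) = \<bar>min 1 (C / norm g)\<bar> * norm g" by (simp add: clip_def)
  also have "\<bar>min 1 (C / norm g)\<bar> = min 1 (C / norm g)" using assms ng by simp
  also have "min 1 (C / norm g) * norm g \<le> C / norm g * norm g"
    using ng by (intro mult_right_mono) auto
  also have "C / norm g * norm g = C" using ng by simp
  finally show ?thesis .
qed

lemma clip_meas[measurable]: "clip C \<in> borel_measurable borel"
  unfolding clip_def[abs_def] by measurable

lemma Bq_single:
  fixes P :: "real^'n::finite^'n" and b :: "real^'d::finite^'n"
  assumes "\<And>i. i \<noteq> j \<Longrightarrow> b$i = 0"
  shows "Bq P b = P$j$j * (norm (b$j))\<^sup>2"
proof -
  have c: "col b k = (b$j$k) *\<^sub>R axis j 1" for k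
    using assms by (auto simp: col_def vec_eq_iff axis_def)
  have a: "axis j 1 \<bullet> (P *v axis j 1) = P$j$j"
    by (simp add: inner_axis' matrix_vector_mult_basis column_def)
  have "Bq P b = (\<Sum>k\<in>UNIV. (b$j$k) * (b$j$k) * P$j$j)"
    unfolding Bq_def c by (simp add: matrix_vector_mult_scaleR a mult.assoc)
  also have "\<dots> = P$j$j * (b$j \<bullet> b$j)"
    by (simp add: inner_vec_def sum_distrib_left mult_ac)
  also have "b$j \<bullet> b$j = (norm (b$j))\<^sup>2" by (simp add: power2_norm_eq_inner)
  finally show ?thesis .
qed



lemma g_meas:
  fixes sg :: "nat \<Rightarrow> 'n::finite \<Rightarrow> 'data \<Rightarrow> real^'d::finite \<Rightarrow> 's \<Rightarrow> real^'d"
  assumes sgm: "\<And>t i d. (\<lambda>(\<xi>, x). sg t i d x \<xi>) \<in> Q \<Otimes>\<^sub>M borel \<rightarrow>\<^sub>M borel" and \<xi>: "\<xi> \<in> space Q"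
  shows "(\<lambda>X::real^'d^'n. \<chi> i. clip C (sg t i (D i) (X$i) \<xi>)) \<in> borel_measurable borel"
proof (rule borel_measurable_vec)
  fix i
  have [measurable]: "(\<lambda>x. sg t i (D i) x \<xi>) \<in> borel_measurable borel"
    using measurable_compose_Pair1[OF \<xi> sgm] by simp
  have "(\<lambda>X::real^'d^'n. clip C (sg t i (D i) (X$i) \<xi>)) \<in> borel_measurable borel" by measurable
  then show "(\<lambda>X::real^'d^'n. (\<chi> i. clip C (sg t i (D i) (X$i) \<xi>)) $ i) \<in> borel_measurable borel" by simp
qed

lemma traj_joint_meas:
  fixes sg :: "nat \<Rightarrow> 'n::finite \<Rightarrow> 'data \<Rightarrow> real^'d::finite \<Rightarrow> 's \<Rightarrow> real^'d"
  assumes sgm: "\<And>t i d. (\<lambda>(\<xi>, x). sg t i d x \<xi>) \<in> Q \<Otimes>\<^sub>M borel \<rightarrow>\<^sub>M borel"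
  shows "t \<le> T \<Longrightarrow> (\<lambda>p. dsgd_traj sg C W \<eta> x0 D (fst p) (snd p) t) \<in> borel_measurable (Q \<Otimes>\<^sub>M PiM {..<T} (\<lambda>_. noise_dist R))"
proof (induction t)
  case 0
  then show ?case by simp
next
  case (Suc t)
  let ?M = "Q \<Otimes>\<^sub>M PiM {..<T} (\<lambda>_. noise_dist R)"
  let ?X = "\<lambda>p. dsgd_traj sg C W \<eta> x0 D (fst p) (snd p) t"
  have X[measurable]: "?X \<in> borel_measurable ?M" using Suc by simp
  have G[measurable]: "(\<lambda>p. \<chi> i. clip C (sg t i (D i) (?X p $ i) (fst p))) \<in> borel_measurable ?M"
  proof (rule borel_measurable_vec)
    fix i
    have "(\<lambda>p. (fst p, ?X p $ i)) \<in> ?M \<rightarrow>\<^sub>M Q \<Otimes>\<^sub>M borel" by measurable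
    from measurable_compose[OF this sgm]
    have [measurable]: "(\<lambda>p. sg t i (D i) (?X p $ i) (fst p)) \<in> borel_measurable ?M" by simp
    show "(\<lambda>p. (\<chi> i. clip C (sg t i (D i) (?X p $ i) (fst p))) $ i) \<in> borel_measurable ?M" by simp
  qed
  have "(\<lambda>V. V t) \<in> PiM {..<T} (\<lambda>_. noise_dist R) \<rightarrow>\<^sub>M noise_dist R" using Suc.prems by simp
  then have "(\<lambda>V. V t) \<in> borel_measurable (PiM {..<T} (\<lambda>_. noise_dist R))" by (simp cong: measurable_cong_sets)
  then have [measurable]: "(\<lambda>p. snd p t) \<in> borel_measurable ?M" by measurable
  show ?case by (simp add: Let_def)
qed

lemma traj_restrict_joint_meas:
  fixes sg :: "nat \<Rightarrow> 'n::finite \<Rightarrow> 'data \<Rightarrow> real^'d::finite \<Rightarrow> 's \<Rightarrow> real^'d"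
  assumes sgm: "\<And>t i d. (\<lambda>(\<xi>, x). sg t i d x \<xi>) \<in> Q \<Otimes>\<^sub>M borel \<rightarrow>\<^sub>M borel"
  shows "(\<lambda>(\<xi>, V). restrict (dsgd_traj sg C W \<eta> x0 D \<xi> V) {..T}) \<in> Q \<Otimes>\<^sub>M PiM {..<T} (\<lambda>_. noise_dist R) \<rightarrow>\<^sub>M PiM {..T} (\<lambda>_. borel)"
proof -
  have "(\<lambda>p. restrict (\<lambda>t. dsgd_traj sg C W \<eta> x0 D (fst p) (snd p) t) {..T}) \<in> Q \<Otimes>\<^sub>M PiM {..<T} (\<lambda>_. noise_dist R) \<rightarrow>\<^sub>M PiM {..T} (\<lambda>_. borel)"
    by (rule measurable_restrict) (use traj_joint_meas[OF sgm] in auto)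
  then show ?thesis by (simp add: case_prod_beta)
qed



lemma dsgd_gtraj_fun:
  "dsgd_traj sg C W \<eta> x0 D \<xi> V = gtraj (\<lambda>t X. \<chi> i. clip C (sg t i (D i) (X$i) \<xi>)) W \<eta> x0 V"
  by (rule ext) (rule dsgd_gtraj)

theorem theorem2:
  fixes Q :: "'s measure"
    and sg :: "nat \<Rightarrow> 'n::finite \<Rightarrow> 'data \<Rightarrow> real^'d \<Rightarrow> 's \<Rightarrow> real^'d"
    and C \<delta> :: real and R W :: "real^'n^'n" and \<eta> :: "nat \<Rightarrow> real"
    and x0 :: "real^'d^'n" and T :: nat
  assumes "prob_space Q"
    and "\<And>t i d. (\<lambda>(\<xi>, x). sg t i d x \<xi>) \<in> Q \<Otimes>\<^sub>M borel \<rightarrow>\<^sub>M borel"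
    and "C > 0"
    and "pos_def_mat R"
    and "0 < \<delta>" and "\<delta> < 1"
  shows "agent_level_DP (dsgd_mech Q sg C R W \<eta> x0 T)
           (2 * C\<^sup>2 * real T * (MAX i. matrix_inv R $ i $ i)
            + 2 * C * sqrt (2 * real T * ln (1 / \<delta>) * (MAX i. matrix_inv R $ i $ i)))
           \<delta>"
proof -
  note Qp = assms(1) and sgm = assms(2) and C = assms(3) and R = assms(4) and \<delta> = assms(5,6)
  define P where "P = matrix_inv R"
  define r where "r = (MAX i. P $ i $ i)"
  define \<beta> where "\<beta> = 4 * C\<^sup>2 * r"
  define N where "N = PiM {..<T} (\<lambda>_. noise_dist R :: (real^'d^'n) measure)"
  define \<epsilon> where "\<epsilon> = 2 * C\<^sup>2 * real T * r + 2 * C * sqrt (2 * real T * ln (1 / \<delta>) * r)"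
  note F = pd_inv_facts[OF R, folded P_def]
  have Pjj: "P$j$j > 0" for j
  proof -
    have "axis j 1 \<noteq> (0::real^'n)" by simp
    from F(4)[OF this] show ?thesis by (simp add: inner_axis' matrix_vector_mult_basis column_def)
  qed
  have rge: "P$j$j \<le> r" for j unfolding r_def by (rule Max_ge) auto
  have r0: "r > 0" using Pjj rge by (meson less_le_trans)
  have \<beta>0: "\<beta> > 0" using C r0 by (simp add: \<beta>_def)
  have eps: "\<epsilon> = \<beta> / 2 * real T + 2 * sqrt (\<beta> / 2 * real T * ln (1 / \<delta>))"
  proof -
    have "\<beta> / 2 * real T * ln (1 / \<delta>) = C\<^sup>2 * (2 * real T * ln (1 / \<delta>) * r)"
      by (simp add: \<beta>_def algebra_simps)
    then have "sqrt (\<beta> / 2 * real T * ln (1 / \<delta>)) = sqrt (C\<^sup>2) * sqrt (2 * real T * ln (1 / \<delta>) * r)"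
      by (simp only: real_sqrt_mult)
    also have "sqrt (C\<^sup>2) = C" using C by simp
    finally have "sqrt (\<beta> / 2 * real T * ln (1 / \<delta>)) = C * sqrt (2 * real T * ln (1 / \<delta>) * r)" .
    then show ?thesis by (simp add: \<epsilon>_def \<beta>_def algebra_simps)
  qed
  interpret Q: prob_space Q by (rule Qp)
  interpret N: prob_space N unfolding N_def
    by (rule prob_space_PiM) (rule noise_prob[OF R])
  interpret QN: pair_prob_space Q N ..
  let ?g = "\<lambda>D \<xi> t (X::real^'d^'n). \<chi> i. clip C (sg t i (D i) (X$i) \<xi>)"
  let ?F = "\<lambda>D. \<lambda>(\<xi>, V). restrict (dsgd_traj sg C W \<eta> x0 D \<xi> V) {..T}"
  have Fm[measurable]: "?F D \<in> Q \<Otimes>\<^sub>M N \<rightarrow>\<^sub>M PiM {..T} (\<lambda>_. borel)" for D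
    unfolding N_def by (rule traj_restrict_joint_meas[OF sgm])
  have slice: "Pair \<xi> -` (?F D -` S \<inter> space (Q \<Otimes>\<^sub>M N)) = {V \<in> space N. restrict (gtraj (?g D \<xi>) W \<eta> x0 V) {..T} \<in> S}"
    if "\<xi> \<in> space Q" for \<xi> D S
    using that by (auto simp: space_pair_measure dsgd_gtraj_fun)
  have emD: "emeasure (dsgd_mech Q sg C R W \<eta> x0 T D) S
      = (\<integral>\<^sup>+\<xi>. emeasure N {V \<in> space N. restrict (gtraj (?g D \<xi>) W \<eta> x0 V) {..T} \<in> S} \<partial>Q)"
    if S: "S \<in> sets (PiM {..T} (\<lambda>_. borel))" for D S
  proof -
    have A: "?F D -` S \<inter> space (Q \<Otimes>\<^sub>M N) \<in> sets (Q \<Otimes>\<^sub>M N)" using S by measurable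
    have "emeasure (dsgd_mech Q sg C R W \<eta> x0 T D) S = emeasure (Q \<Otimes>\<^sub>M N) (?F D -` S \<inter> space (Q \<Otimes>\<^sub>M N))"
      unfolding dsgd_mech_def N_def[symmetric] by (rule emeasure_distr[OF Fm S])
    also have "\<dots> = (\<integral>\<^sup>+\<xi>. emeasure N (Pair \<xi> -` (?F D -` S \<inter> space (Q \<Otimes>\<^sub>M N))) \<partial>Q)"
      by (rule N.emeasure_pair_measure_alt[OF A])
    also have "\<dots> = (\<integral>\<^sup>+\<xi>. emeasure N {V \<in> space N. restrict (gtraj (?g D \<xi>) W \<eta> x0 V) {..T} \<in> S} \<partial>Q)"
      by (intro nn_integral_cong) (simp only: slice)
    finally show ?thesis .
  qed
  have slice_meas: "(\<lambda>\<xi>. emeasure N {V \<in> space N. restrict (gtraj (?g D \<xi>) W \<eta> x0 V) {..T} \<in> S}) \<in> borel_measurable Q"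
    if S: "S \<in> sets (PiM {..T} (\<lambda>_. borel))" for D S
  proof -
    have A: "?F D -` S \<inter> space (Q \<Otimes>\<^sub>M N) \<in> sets (Q \<Otimes>\<^sub>M N)" using S by measurable
    from N.measurable_emeasure_Pair[OF A]
    show ?thesis by (rule measurable_cong[THEN iffD1, rotated]) (simp only: slice)
  qed
  show ?thesis unfolding agent_level_DP_def \<epsilon>_def[symmetric] r_def[symmetric] P_def[symmetric]
  proof (intro allI impI ballI)
    fix D D' :: "'n \<Rightarrow> 'data" and S
    assume nb: "agent_neighbors D D'"
    then obtain j where j: "\<And>i. i \<noteq> j \<Longrightarrow> D i = D' i" unfolding agent_neighbors_def by auto
    assume "S \<in> sets (dsgd_mech Q sg C R W \<eta> x0 T D)"
    then have S: "S \<in> sets (PiM {..T} (\<lambda>_. borel))" by (simp add: dsgd_mech_def)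
    have bnd: "Bq (matrix_inv R) (?g D \<xi> t X - ?g D' \<xi> t X) \<le> \<beta>" for \<xi> t X
    proof -
      define b where "b = ?g D \<xi> t X - ?g D' \<xi> t X"
      have b0: "b$i = 0" if "i \<noteq> j" for i using j[OF that] by (simp add: b_def)
      have "norm (b$j) \<le> norm (clip C (sg t j (D j) (X$j) \<xi>)) + norm (clip C (sg t j (D' j) (X$j) \<xi>))"
        by (simp add: b_def norm_triangle_ineq4)
      also have "\<dots> \<le> C + C" using clip_norm[OF C] by (intro add_mono) auto
      finally have nb: "norm (b$j) \<le> 2 * C" by simp
      have "(norm (b$j))\<^sup>2 \<le> (2 * C)\<^sup>2" using nb by (intro power_mono) auto
      then have "P$j$j * (norm (b$j))\<^sup>2 \<le> r * (2 * C)\<^sup>2"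
        using rge[of j] Pjj[of j] r0 by (intro mult_mono) auto
      then show ?thesis using Bq_single[of j b P, OF b0]
        by (simp add: b_def[symmetric] P_def[symmetric] \<beta>_def power2_eq_square mult_ac)
    qed
    have dp: "emeasure N {V \<in> space N. restrict (gtraj (?g D \<xi>) W \<eta> x0 V) {..T} \<in> S}
        \<le> ennreal (exp \<epsilon>) * emeasure N {V \<in> space N. restrict (gtraj (?g D' \<xi>) W \<eta> x0 V) {..T} \<in> S} + ennreal \<delta>"
      if \<xi>: "\<xi> \<in> space Q" for \<xi>
    proof -
      have gm: "?g D'' \<xi> t \<in> borel_measurable borel" for D'' t
        by (rule g_meas[OF sgm \<xi>])
      show ?thesis unfolding N_def eps
        by (rule traj_dp[where ?g1.0="?g D \<xi>" and ?g2.0="?g D' \<xi>", OF R gm gm bnd \<beta>0 \<delta> S])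
    qed
    have "emeasure (dsgd_mech Q sg C R W \<eta> x0 T D) S
        \<le> (\<integral>\<^sup>+\<xi>. ennreal (exp \<epsilon>) * emeasure N {V \<in> space N. restrict (gtraj (?g D' \<xi>) W \<eta> x0 V) {..T} \<in> S} + ennreal \<delta> \<partial>Q)"
      unfolding emD[OF S] by (intro nn_integral_mono dp)
    also have "\<dots> = ennreal (exp \<epsilon>) * emeasure (dsgd_mech Q sg C R W \<eta> x0 T D') S + ennreal \<delta>"
      unfolding emD[OF S]
      using slice_meas[OF S, of D']
      by (subst nn_integral_add) (auto simp: nn_integral_cmult Q.emeasure_space_1)
    finally have le: "emeasure (dsgd_mech Q sg C R W \<eta> x0 T D) S
        \<le> ennreal (exp \<epsilon>) * emeasure (dsgd_mech Q sg C R W \<eta> x0 T D') S + ennreal \<delta>" .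
    have pD: "prob_space (dsgd_mech Q sg C R W \<eta> x0 T D'')" for D''
      unfolding dsgd_mech_def N_def[symmetric]
      by (rule prob_space.prob_space_distr) (simp_all add: QN.prob_space_axioms)
    have "ennreal (measure (dsgd_mech Q sg C R W \<eta> x0 T D) S)
        \<le> ennreal (exp \<epsilon> * measure (dsgd_mech Q sg C R W \<eta> x0 T D') S + \<delta>)"
      using le \<delta>
      by (simp add: finite_measure.emeasure_eq_measure[OF prob_space.axioms(1)[OF pD]] ennreal_mult ennreal_plus[symmetric])
    then show "measure (dsgd_mech Q sg C R W \<eta> x0 T D) S \<le> exp \<epsilon> * measure (dsgd_mech Q sg C R W \<eta> x0 T D') S + \<delta>"
      using \<delta> by (subst (asm) ennreal_le_iff) auto
  qed
qed

end
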